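(* In the setting below, assume additionally that $\|\kappa(\xi)\|_{C^1(\bar D)}\le\kappa_{\sup}^*$ for all $\xi\in\Xi$ and some $\kappa_{\sup}^*>0$. Then $$\|\nabla g_\xi(u_1)-\nabla g_\xi(u_2)\|_{L^\infty(D)}\le\ell\Big(C_{H^2;L^\infty}\frac{C_{H^2}(\kappa_{\sup}^* )^3}{(\kappa_{\inf}^*/2)^4}\Big)^2\|u_1-u_2\|_{L^1(D)}$$ for all $u_1,u_2\in\mathcal D(\psi)$ and $\xi\in\Xi$.
   Context: Let $D\subset\mathbb R^d$, $d\in\{1,2,3\}$, be a bounded polyhedral domain, $H^{-1}(D)=H_0^1(D)^*$, $\imath:H_0^1(D)\to L^2(D)$ the compact embedding, $B=\imath^*:L^2(D)\to H^{-1}(D)$ (so $\langle Bu,v\rangle=(u,v)_{L^2}$), $B^*=\imath$. Let $\mathfrak l,\mathfrak u\in L^\infty(D)$ with $\mathfrak l\le0\le\mathfrak u$ a.e., $\beta\ge0$, $\psi(u)=\beta\|u\|_{L^1(D)}+I_{[\mathfrak l,\mathfrak u]}(u)$, $\mathcal D(\psi)=[\mathfrak l,\mathfrak u]=\{v\in L^2(D):\mathfrak l\le v\le\mathfrak u\text{ a.e.}\}$. Let $\Xi$ be a complete separable metric space and $\boldsymbol\xi$ a $\Xi$-valued random element. Assume: $J:L^2(D)\to[0,\infty)$ is convex and continuously differentiable with $\ell$-Lipschitz gradient, and $J(v)\le\varrho(\|v\|_{L^2})$ with $\varrho$ a nondecreasing polynomial; $\kappa:\Xi\to C^1(\bar D)$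 is measurable with all moments $\mathbb E[\|\kappa(\boldsymbol\xi)\|_{C^1(\bar D)}^p]$ finite and $\kappa(\xi)(x)\ge\kappa_{\inf}^*>0$. For $\kappa\in C^1(\bar D)$, $\kappa>\kappa_{\inf}^*/2$, and $w\in H^{-1}(D)$ let $y(\kappa,w)\in H_0^1(D)$ solve $(\kappa\nabla y,\nabla v)_{L^2(D)^d}=\langle w,v\rangle$ for all $v\in H_0^1(D)$; let $C_{H^2}>0$ be a constant with $\|y(\kappa,Bu)\|_{H^2(D)}\le C_{H^2}\|\kappa\|_{C^1(\bar D)}^3(\kappa_{\inf}^*/2)^{-4}\|u\|_{L^2(D)}$ for all such $\kappa$ and $u\in L^2(D)$. Let $C_{H^2;L^\infty}$ be the embedding constant of $H^2(D)\hookrightarrow L^\infty(D)$. Set $S(w,\xi)=y(\kappa(\xi),w)$ and $g_\xi(u)=J(B^*S(Bu,\xi))$ for $u\in L^2(D)$; $\nabla g_\xi$ is its $L^2(D)$-gradient. *)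

theory Defs
  imports "HOL-Probability.Probability" "HOL-Computational_Algebra.Polynomial"
begin

definition polyhedral_domain :: "'a::euclidean_space set \<Rightarrow> bool" where
  "polyhedral_domain D \<longleftrightarrow> open D \<and> connected D \<and> bounded D \<and> D \<noteq> {} \<and>
     interior (closure D) = D \<and>
     (\<exists>P. finite P \<and> (\<forall>p\<in>P. polytope p) \<and> closure D = \<Union>P)"

section \<open>Lebesgue spaces on D (functions modulo a.e. equality are represented by functions)\<close>

definition L2 :: "'a::euclidean_space set \<Rightarrow> ('a \<Rightarrow> real) \<Rightarrow> bool" where
  "L2 D f \<longleftrightarrow> f \<in> borel_measurable (lebesgue_on D) \<and>
     integrable (lebesgue_on D) (\<lambda>x. (f x)\<^sup>2)"

definition L2sq :: "'a::euclidean_space set \<Rightarrow> ('a \<Rightarrow> real) \<Rightarrow> real" where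
  "L2sq D f = (LINT x|lebesgue_on D. (f x)\<^sup>2)"

definition L2norm :: "'a::euclidean_space set \<Rightarrow> ('a \<Rightarrow> real) \<Rightarrow> real" where
  "L2norm D f = sqrt (L2sq D f)"

definition L2inner :: "'a::euclidean_space set \<Rightarrow> ('a \<Rightarrow> real) \<Rightarrow> ('a \<Rightarrow> real) \<Rightarrow> real" where
  "L2inner D f g = (LINT x|lebesgue_on D. f x * g x)"

definition L1norm :: "'a::euclidean_space set \<Rightarrow> ('a \<Rightarrow> real) \<Rightarrow> real" where
  "L1norm D f = (LINT x|lebesgue_on D. \<bar>f x\<bar>)"

definition Linfnorm :: "'a::euclidean_space set \<Rightarrow> ('a \<Rightarrow> real) \<Rightarrow> ereal" where
  "Linfnorm D f = esssup (lebesgue_on D) (\<lambda>x. ereal \<bar>f x\<bar>)"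

definition Linf :: "'a::euclidean_space set \<Rightarrow> ('a \<Rightarrow> real) \<Rightarrow> bool" where
  "Linf D f \<longleftrightarrow> f \<in> borel_measurable (lebesgue_on D) \<and> Linfnorm D f < \<infinity>"

definition dpart :: "'a::euclidean_space \<Rightarrow> ('a \<Rightarrow> real) \<Rightarrow> 'a \<Rightarrow> real" where
  "dpart i f x = frechet_derivative f (at x) i"

fun iter_dpart :: "'a::euclidean_space list \<Rightarrow> ('a \<Rightarrow> real) \<Rightarrow> 'a \<Rightarrow> real" where
  "iter_dpart [] f = f"
| "iter_dpart (i # is) f = dpart i (iter_dpart is f)"

definition smooth :: "('a::euclidean_space \<Rightarrow> real) \<Rightarrow> bool" where
  "smooth f \<longleftrightarrow> (\<forall>is. set is \<subseteq> Basis \<longrightarrow>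
      (\<forall>x. iter_dpart is f differentiable (at x)) \<and> continuous_on UNIV (iter_dpart is f))"

definition test_fun :: "'a::euclidean_space set \<Rightarrow> ('a \<Rightarrow> real) \<Rightarrow> bool" where
  "test_fun D \<phi> \<longleftrightarrow> smooth \<phi> \<and> compact (closure {x. \<phi> x \<noteq> 0}) \<and> closure {x. \<phi> x \<noteq> 0} \<subseteq> D"

definition weak_deriv :: "'a::euclidean_space set \<Rightarrow> ('a \<Rightarrow> real) \<Rightarrow> 'a \<Rightarrow> ('a \<Rightarrow> real) \<Rightarrow> bool" where
  "weak_deriv D u i v \<longleftrightarrow> (\<forall>\<phi>. test_fun D \<phi> \<longrightarrow>
      (LINT x|lebesgue_on D. u x * dpart i \<phi> x) = - (LINT x|lebesgue_on D. v x * \<phi> x))"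

definition wgrad :: "'a::euclidean_space set \<Rightarrow> ('a \<Rightarrow> real) \<Rightarrow> ('a \<Rightarrow> 'a \<Rightarrow> real) \<Rightarrow> bool" where
  "wgrad D u g \<longleftrightarrow> (\<forall>i\<in>Basis. L2 D (g i) \<and> weak_deriv D u i (g i))"

definition H01 :: "'a::euclidean_space set \<Rightarrow> ('a \<Rightarrow> real) \<Rightarrow> bool" where
  "H01 D u \<longleftrightarrow> L2 D u \<and> (\<exists>g. wgrad D u g \<and>
      (\<forall>\<epsilon>>0. \<exists>\<phi>. test_fun D \<phi> \<and>
         L2sq D (\<lambda>x. u x - \<phi> x) + (\<Sum>i\<in>Basis. L2sq D (\<lambda>x. g i x - dpart i \<phi> x)) < \<epsilon>))"

text \<open>g, h are first and second weak derivatives of y in L2, so y is in H^2(D);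
  the H^2 norm computed from these (a.e. unique) derivatives.\<close>
definition H2wit :: "'a::euclidean_space set \<Rightarrow> ('a \<Rightarrow> real) \<Rightarrow> ('a \<Rightarrow> 'a \<Rightarrow> real)
    \<Rightarrow> ('a \<Rightarrow> 'a \<Rightarrow> 'a \<Rightarrow> real) \<Rightarrow> bool" where
  "H2wit D y g h \<longleftrightarrow> L2 D y \<and> wgrad D y g \<and> (\<forall>i\<in>Basis. wgrad D (g i) (h i))"

definition H2norm_wit :: "'a::euclidean_space set \<Rightarrow> ('a \<Rightarrow> real) \<Rightarrow> ('a \<Rightarrow> 'a \<Rightarrow> real)
    \<Rightarrow> ('a \<Rightarrow> 'a \<Rightarrow> 'a \<Rightarrow> real) \<Rightarrow> real" where
  "H2norm_wit D y g h = sqrt (L2sq D y + (\<Sum>i\<in>Basis. L2sq D (g i))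
      + (\<Sum>i\<in>Basis. \<Sum>j\<in>Basis. L2sq D (h i j)))"

definition C1cl :: "'a::euclidean_space set \<Rightarrow> ('a \<Rightarrow> real) \<Rightarrow> bool" where
  "C1cl D f \<longleftrightarrow> continuous_on (closure D) f \<and> (\<forall>x\<in>D. f differentiable (at x)) \<and>
     (\<forall>i\<in>Basis. \<exists>g. continuous_on (closure D) g \<and> (\<forall>x\<in>D. dpart i f x = g x))"

definition C1norm :: "'a::euclidean_space set \<Rightarrow> ('a \<Rightarrow> real) \<Rightarrow> real" where
  "C1norm D f = (SUP x\<in>closure D. \<bar>f x\<bar>) + (\<Sum>i\<in>Basis. SUP x\<in>D. \<bar>dpart i f x\<bar>)"

definition C1_open :: "'a::euclidean_space set \<Rightarrow> ('a \<Rightarrow> real) set \<Rightarrow> bool" where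
  "C1_open D U \<longleftrightarrow> U \<subseteq> Collect (C1cl D) \<and>
     (\<forall>f\<in>U. \<exists>r>0. \<forall>g. C1cl D g \<and> C1norm D (\<lambda>x. g x - f x) < r \<longrightarrow> g \<in> U)"

definition C1_borel :: "'a::euclidean_space set \<Rightarrow> ('a \<Rightarrow> real) measure" where
  "C1_borel D = sigma (Collect (C1cl D)) (Collect (C1_open D))"

text \<open>y solves (kappa grad y, grad v) = (u, v) for all v in H_0^1, i.e. y = y(kappa, B u).\<close>
definition solves :: "'a::euclidean_space set \<Rightarrow> ('a \<Rightarrow> real) \<Rightarrow> ('a \<Rightarrow> real) \<Rightarrow> ('a \<Rightarrow> real) \<Rightarrow> bool" where
  "solves D \<kappa> u y \<longleftrightarrow> H01 D y \<and> (\<exists>gy. wgrad D y gy \<and>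
     (\<forall>v gv. H01 D v \<and> wgrad D v gv \<longrightarrow>
        (LINT x|lebesgue_on D. \<kappa> x * (\<Sum>i\<in>Basis. gy i x * gv i x)) = L2inner D u v))"

definition ysol :: "'a::euclidean_space set \<Rightarrow> ('a \<Rightarrow> real) \<Rightarrow> ('a \<Rightarrow> real) \<Rightarrow> ('a \<Rightarrow> real)" where
  "ysol D \<kappa> u = (SOME y. solves D \<kappa> u y)"

definition L2_gradient :: "'a::euclidean_space set \<Rightarrow> (('a \<Rightarrow> real) \<Rightarrow> real) \<Rightarrow> ('a \<Rightarrow> real) \<Rightarrow> ('a \<Rightarrow> real) \<Rightarrow> bool" where
  "L2_gradient D F u G \<longleftrightarrow> L2 D G \<and> (\<forall>\<epsilon>>0. \<exists>\<delta>>0. \<forall>h. L2 D h \<and> L2norm D h < \<delta> \<longrightarrow>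
      \<bar>F (\<lambda>x. u x + h x) - F u - L2inner D G h\<bar> \<le> \<epsilon> * L2norm D h)"

text \<open>g_xi(u) = J(B^* S(B u, xi)).\<close>
definition gfun :: "'a::euclidean_space set \<Rightarrow> (('a \<Rightarrow> real) \<Rightarrow> real) \<Rightarrow> ('b \<Rightarrow> 'a \<Rightarrow> real) \<Rightarrow> 'b
    \<Rightarrow> ('a \<Rightarrow> real) \<Rightarrow> real" where
  "gfun D J \<kappa> \<xi> u = J (ysol D (\<kappa> \<xi>) u)"

end

theory Submission imports Defs begin

lemma sq_lin_le: "((a::real)*f+b*g)^2 \<le> 2*a^2*f^2+2*b^2*g^2"
proof -
  have "0 \<le> (a*f - b*g)^2" by simp
  then show ?thesis by (simp add: power2_eq_square algebra_simps)
qed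

lemma sq_le_bd: "\<bar>k\<bar> \<le> (B::real) \<Longrightarrow> k^2 \<le> B^2"
  by (metis abs_le_square_iff abs_ge_zero abs_of_nonneg order_trans)

lemma abs_prod_le: "\<bar>(f::real)*g\<bar> \<le> f^2 + g^2"
proof -
  have "0 \<le> (\<bar>f\<bar> - \<bar>g\<bar>)^2" by simp
  then have "2*\<bar>f\<bar>*\<bar>g\<bar> \<le> f^2+g^2" by (simp add: power2_eq_square algebra_simps)
  moreover have "0 \<le> \<bar>f\<bar>*\<bar>g\<bar>" by simp
  ultimately show ?thesis unfolding abs_mult by linarith
qed

context
  fixes D :: "'a::euclidean_space set"
  assumes Dopen: "open D" and Dbdd: "bounded D" and Dne: "D \<noteq> {}"
begin

lemma D_lmeas: "D \<in> lmeasurable"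
  using Dopen Dbdd by (simp add: lmeasurable_open)

lemma D_leb: "D \<in> sets lebesgue"
  using D_lmeas by (simp add: fmeasurableD)

lemma finD: "finite_measure (lebesgue_on D)"
  using finite_measure_lebesgue_on[OF D_lmeas] .

lemma measD_pos: "measure (lebesgue_on D) D > 0"
proof -
  obtain c where c: "c \<in> D" using Dne by auto
  obtain r where r: "r > 0" "ball c r \<subseteq> D" using Dopen c open_contains_ball by blast
  have "measure lborel (ball c r) > 0" using content_ball_pos[OF r(1)] .
  also have "measure lborel (ball c r) \<le> measure lebesgue D"
    using r(2) D_lmeas by (metis measure_completion measure_mono_fmeasurable measure_nonneg
    measure_notin_sets)
  finally show ?thesis using D_leb by (simp add: measure_restrict_space)
qed

lemma int_const: "integrable (lebesgue_on D) (\<lambda>x. c::real)"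
  using finD finite_measure.integrable_const by blast

lemma L2_meas: "L2 D f \<Longrightarrow> f \<in> borel_measurable (lebesgue_on D)"
  by (simp add: L2_def)

lemma L2_sqint: "L2 D f \<Longrightarrow> integrable (lebesgue_on D) (\<lambda>x. (f x)^2)"
  by (simp add: L2_def)

lemma L2_int: assumes "L2 D f" shows "integrable (lebesgue_on D) f"
proof (rule Bochner_Integration.integrable_bound[where f="\<lambda>x. 1 + (f x)^2"])
  show "integrable (lebesgue_on D) (\<lambda>x. 1 + (f x)^2)"
    using int_const L2_sqint[OF assms] by simp
  show "f \<in> borel_measurable (lebesgue_on D)" using L2_meas[OF assms] .
  have "\<bar>t\<bar> \<le> \<bar>1 + t^2\<bar>" for t :: real
    using abs_prod_le[of t 1] by simp
  then show "AE x in lebesgue_on D. norm (f x) \<le> norm (1 + (f x)^2)" by simp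
qed

lemma L2_prod: assumes "L2 D f" "L2 D g" shows "integrable (lebesgue_on D) (\<lambda>x. f x * g x)"
proof (rule Bochner_Integration.integrable_bound[where f="\<lambda>x. (f x)^2 + (g x)^2"])
  show "integrable (lebesgue_on D) (\<lambda>x. (f x)^2 + (g x)^2)"
    using L2_sqint[OF assms(1)] L2_sqint[OF assms(2)] by simp
  show "(\<lambda>x. f x * g x) \<in> borel_measurable (lebesgue_on D)"
    using L2_meas[OF assms(1)] L2_meas[OF assms(2)] by measurable
  show "AE x in lebesgue_on D. norm (f x * g x) \<le> norm ((f x)^2 + (g x)^2)"
    using abs_prod_le by simp
qed

lemma L2_lin: assumes "L2 D f" "L2 D g" shows "L2 D (\<lambda>x. a * f x + b * g x)"
  unfolding L2_def
proof
  show m: "(\<lambda>x. a * f x + b * g x) \<in> borel_measurable (lebesgue_on D)"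
    using L2_meas[OF assms(1)] L2_meas[OF assms(2)] by measurable
  show "integrable (lebesgue_on D) (\<lambda>x. (a * f x + b * g x)^2)"
  proof (rule Bochner_Integration.integrable_bound[where f="\<lambda>x. 2*a^2*(f x)^2 + 2*b^2*(g x)^2"])
    show "integrable (lebesgue_on D) (\<lambda>x. 2*a^2*(f x)^2 + 2*b^2*(g x)^2)"
      using L2_sqint[OF assms(1)] L2_sqint[OF assms(2)] by simp
    show "(\<lambda>x. (a * f x + b * g x)^2) \<in> borel_measurable (lebesgue_on D)"
      using m by measurable
    show "AE x in lebesgue_on D. norm ((a * f x + b * g x)^2) \<le> norm (2*a^2*(f x)^2 + 2*b^2*(g x)^2)"
    proof (intro AE_I2)
      fix x
      have h: "(a*f x + b*g x)^2 \<le> 2*a^2*(f x)^2 + 2*b^2*(g x)^2" by (rule sq_lin_le)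
      show "norm ((a * f x + b * g x)^2) \<le> norm (2*a^2*(f x)^2 + 2*b^2*(g x)^2)"
        unfolding real_norm_def by (metis abs_ge_self abs_of_nonneg order_trans zero_le_power2 h)
    qed
  qed
qed

lemma L2_bdd: assumes "f \<in> borel_measurable (lebesgue_on D)" "\<And>x. x \<in> D \<Longrightarrow> \<bar>f x\<bar> \<le> B"
  shows "L2 D f"
  unfolding L2_def
proof
  show "f \<in> borel_measurable (lebesgue_on D)" by fact
  show "integrable (lebesgue_on D) (\<lambda>x. (f x)^2)"
  proof (rule Bochner_Integration.integrable_bound[where f="\<lambda>x. B^2"])
    show "integrable (lebesgue_on D) (\<lambda>x. B^2)" using int_const .
    show "(\<lambda>x. (f x)^2) \<in> borel_measurable (lebesgue_on D)" using assms(1) by measurable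
    have pt: "x \<in> D \<Longrightarrow> (f x)^2 \<le> B^2" for x
      using assms(2)[of x] by (simp add: sq_le_bd)
    show "AE x in lebesgue_on D. norm ((f x)^2) \<le> norm (B^2)"
    proof (rule AE_I2)
      fix x assume "x \<in> space (lebesgue_on D)"
      then have "x \<in> D" by simp
      then have h: "(f x)^2 \<le> B^2" by (rule pt)
      show "norm ((f x)^2) \<le> norm (B^2)"
        unfolding real_norm_def by (metis abs_ge_self abs_of_nonneg order_trans zero_le_power2 h)
    qed
  qed
qed

lemma L2_bdd_mult: assumes "L2 D f" "k \<in> borel_measurable (lebesgue_on D)" "\<And>x. x \<in> D \<Longrightarrow> \<bar>k x\<bar> \<le> B"
  shows "L2 D (\<lambda>x. k x * f x)"
  unfolding L2_def
proof
  show m: "(\<lambda>x. k x * f x) \<in> borel_measurable (lebesgue_on D)"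
    using L2_meas[OF assms(1)] assms(2) by measurable
  show "integrable (lebesgue_on D) (\<lambda>x. (k x * f x)^2)"
  proof (rule Bochner_Integration.integrable_bound[where f="\<lambda>x. B^2 * (f x)^2"])
    show "integrable (lebesgue_on D) (\<lambda>x. B^2 * (f x)^2)" using L2_sqint[OF assms(1)] by simp
    show "(\<lambda>x. (k x * f x)^2) \<in> borel_measurable (lebesgue_on D)" using m by measurable
    have "x \<in> D \<Longrightarrow> (k x * f x)^2 \<le> B^2 * (f x)^2" for x
      using assms(3)[of x] by (simp add: power_mult_distrib sq_le_bd mult_right_mono)
    then show "AE x in lebesgue_on D. norm ((k x * f x)^2) \<le> norm (B^2 * (f x)^2)"
      using D_leb by (auto intro!: AE_I2 simp: space_restrict_space)
  qed
qed

lemma cont_bdd: fixes f :: "'a \<Rightarrow> real" assumes "continuous_on (closure D) f"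
  shows "f \<in> borel_measurable (lebesgue_on D)" "\<exists>B. \<forall>x\<in>closure D. \<bar>f x\<bar> \<le> B"
proof -
  show "f \<in> borel_measurable (lebesgue_on D)"
    using continuous_imp_measurable_on_sets_lebesgue[OF continuous_on_subset[OF assms closure_subset] D_leb] .
  have "compact (f ` closure D)"
    using compact_continuous_image[OF assms] Dbdd compact_closure by blast
  then have "bounded (f ` closure D)" by (rule compact_imp_bounded)
  then obtain B where "\<forall>y\<in>f ` closure D. norm y \<le> B" unfolding bounded_iff by blast
  then show "\<exists>B. \<forall>x\<in>closure D. \<bar>f x\<bar> \<le> B" by auto
qed

lemma L2_cont: fixes f :: "'a \<Rightarrow> real" assumes "continuous_on (closure D) f" shows "L2 D f"
proof -
  obtain B where "\<forall>x\<in>closure D. \<bar>f x\<bar> \<le> B" using cont_bdd(2)[OF assms] by blast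
  then have "\<And>x. x \<in> D \<Longrightarrow> \<bar>f x\<bar> \<le> B" using closure_subset by blast
  then show ?thesis by (rule L2_bdd[OF cont_bdd(1)[OF assms]])
qed

lemma L2inner_lin: assumes "L2 D f" "L2 D g" "L2 D v"
  shows "L2inner D (\<lambda>x. a*f x + b*g x) v = a * L2inner D f v + b * L2inner D g v"
proof -
  have "L2inner D (\<lambda>x. a*f x + b*g x) v = (LINT x|lebesgue_on D. a * (f x * v x) + b * (g x * v x))"
    unfolding L2inner_def by (simp add: algebra_simps)
  also have "\<dots> = a * L2inner D f v + b * L2inner D g v"
    unfolding L2inner_def using L2_prod[OF assms(1,3)] L2_prod[OF assms(2,3)] by simp
  finally show ?thesis .
qed

lemma L2inner_comm: "L2inner D f g = L2inner D g f"
  unfolding L2inner_def by (simp add: mult.commute)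

lemma L2sq_nonneg: "0 \<le> L2sq D f"
  unfolding L2sq_def by (simp add: integral_nonneg_AE)

lemma L2norm_nonneg: "0 \<le> L2norm D f"
  unfolding L2norm_def using L2sq_nonneg by simp

lemma L2sq_eq: "L2sq D f = (L2norm D f)^2"
  unfolding L2norm_def using L2sq_nonneg by simp

lemma L2sq_inner: "L2sq D f = L2inner D f f"
  unfolding L2sq_def L2inner_def by (simp add: power2_eq_square)

lemma L2sq_lin_le: assumes "L2 D f" "L2 D g"
  shows "L2sq D (\<lambda>x. a*f x + b*g x) \<le> 2*a^2*L2sq D f + 2*b^2*L2sq D g"
proof -
  have "L2sq D (\<lambda>x. a*f x + b*g x) \<le> (LINT x|lebesgue_on D. 2*a^2*(f x)^2 + 2*b^2*(g x)^2)"
    unfolding L2sq_def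
    using L2_sqint[OF L2_lin[OF assms]] L2_sqint[OF assms(1)] L2_sqint[OF assms(2)]
    by (intro integral_mono) (simp_all add: sq_lin_le)
  also have "\<dots> = 2*a^2*L2sq D f + 2*b^2*L2sq D g"
    unfolding L2sq_def using L2_sqint[OF assms(1)] L2_sqint[OF assms(2)] by simp
  finally show ?thesis .
qed

lemma L2norm_scale: "L2norm D (\<lambda>x. t * f x) = \<bar>t\<bar> * L2norm D f"
proof -
  have "L2sq D (\<lambda>x. t * f x) = t^2 * L2sq D f"
    unfolding L2sq_def by (simp add: power_mult_distrib)
  then show ?thesis unfolding L2norm_def by (simp add: real_sqrt_mult)
qed

lemma L2sq_zero_AE: assumes "L2 D f" "L2sq D f = 0" shows "AE x in lebesgue_on D. f x = 0"
proof -
  have "AE x in lebesgue_on D. (f x)^2 = 0"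
    using assms integral_nonneg_eq_0_iff_AE[OF L2_sqint[OF assms(1)]] unfolding L2sq_def by simp
  then show ?thesis by simp
qed

lemma L2inner_cong: assumes "L2 D f" "L2 D g" "L2 D v" "AE x in lebesgue_on D. f x = g x"
  shows "L2inner D f v = L2inner D g v"
proof -
  have [measurable]: "f \<in> borel_measurable (lebesgue_on D)" "g \<in> borel_measurable (lebesgue_on D)"
    "v \<in> borel_measurable (lebesgue_on D)" using assms L2_meas by auto
  show ?thesis unfolding L2inner_def using assms(4)
  by (intro integral_cong_AE) (auto elim!: AE_mp)
qed

lemma L2sq_cong: assumes "L2 D f" "L2 D g" "AE x in lebesgue_on D. f x = g x"
  shows "L2sq D f = L2sq D g"
proof -
  have [measurable]: "f \<in> borel_measurable (lebesgue_on D)" "g \<in> borel_measurable (lebesgue_on D)"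
    using assms L2_meas by auto
  show ?thesis unfolding L2sq_def using assms(3)
  by (intro integral_cong_AE) (auto elim!: AE_mp)
qed

lemma L2norm_cong: assumes "L2 D f" "L2 D g" "AE x in lebesgue_on D. f x = g x"
  shows "L2norm D f = L2norm D g"
  unfolding L2norm_def using L2sq_cong[OF assms] by simp


lemma L2_diff: "L2 D f \<Longrightarrow> L2 D g \<Longrightarrow> L2 D (\<lambda>x. f x - g x)"
  using L2_lin[of f g 1 "-1"] by simp

lemma L2_add: "L2 D f \<Longrightarrow> L2 D g \<Longrightarrow> L2 D (\<lambda>x. f x + g x)"
  using L2_lin[of f g 1 1] by simp

end

lemma fd_lin:
  fixes P Q :: "'a::euclidean_space \<Rightarrow> real"
  assumes "P differentiable (at x)" "Q differentiable (at x)"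
  shows "frechet_derivative (\<lambda>x. a * P x + b * Q x) (at x) =
     (\<lambda>h. a * frechet_derivative P (at x) h + b * frechet_derivative Q (at x) h)"
proof -
  have "(P has_derivative frechet_derivative P (at x)) (at x)"
    using assms(1) frechet_derivative_works by blast
  moreover have "(Q has_derivative frechet_derivative Q (at x)) (at x)"
    using assms(2) frechet_derivative_works by blast
  ultimately have "((\<lambda>x. a * P x + b * Q x) has_derivative
     (\<lambda>h. a * frechet_derivative P (at x) h + b * frechet_derivative Q (at x) h)) (at x)"
    by (intro has_derivative_add has_derivative_mult_right)
  then show ?thesis using frechet_derivative_at by metis
qed

lemma iter_dpart_lin:
  assumes "smooth \<phi>" "smooth \<psi>"
  shows "set is \<subseteq> Basis \<Longrightarrow> iter_dpart is (\<lambda>x. a * \<phi> x + b * \<psi> x) =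
     (\<lambda>x. a * iter_dpart is \<phi> x + b * iter_dpart is \<psi> x)"
proof (induction "is")
  case Nil
  then show ?case by simp
next
  case (Cons i "is")
  then have sub: "set is \<subseteq> Basis" by simp
  have dP: "\<And>x. iter_dpart is \<phi> differentiable (at x)" "\<And>x. iter_dpart is \<psi> differentiable (at x)"
    using assms sub unfolding smooth_def by blast+
  have "iter_dpart (i # is) (\<lambda>x. a * \<phi> x + b * \<psi> x)
      = dpart i (\<lambda>x. a * iter_dpart is \<phi> x + b * iter_dpart is \<psi> x)"
    using Cons sub by simp
  also have "\<dots> = (\<lambda>x. a * iter_dpart (i # is) \<phi> x + b * iter_dpart (i # is) \<psi> x)"
    unfolding dpart_def iter_dpart.simps using fd_lin[OF dP(1) dP(2)] by (intro ext) simp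
  finally show ?case .
qed

lemma smooth_lin:
  assumes "smooth \<phi>" "smooth \<psi>"
  shows "smooth (\<lambda>x. a * \<phi> x + b * \<psi> x)"
  unfolding smooth_def
proof (intro allI impI conjI)
  fix "is" :: "'a list" assume sub: "set is \<subseteq> Basis"
  have e: "iter_dpart is (\<lambda>x. a * \<phi> x + b * \<psi> x) =
     (\<lambda>x. a * iter_dpart is \<phi> x + b * iter_dpart is \<psi> x)"
    using iter_dpart_lin[OF assms sub] .
  have d: "\<And>x. iter_dpart is \<phi> differentiable (at x)" "\<And>x. iter_dpart is \<psi> differentiable (at x)"
    and c: "continuous_on UNIV (iter_dpart is \<phi>)" "continuous_on UNIV (iter_dpart is \<psi>)"
    using assms sub unfolding smooth_def by blast+
  fix x
  show "iter_dpart is (\<lambda>x. a * \<phi> x + b * \<psi> x) differentiable at x"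
    unfolding e using d[of x] by (intro differentiable_add differentiable_mult differentiable_const) auto
  show "continuous_on UNIV (iter_dpart is (\<lambda>x. a * \<phi> x + b * \<psi> x))"
    unfolding e using c by (intro continuous_intros) auto
qed

lemma dpart_lin:
  assumes "smooth \<phi>" "smooth \<psi>" "i \<in> Basis"
  shows "dpart i (\<lambda>x. a * \<phi> x + b * \<psi> x) = (\<lambda>x. a * dpart i \<phi> x + b * dpart i \<psi> x)"
  using iter_dpart_lin[OF assms(1,2), of "[i]" a b] assms(3) by simp

lemma test_lin:
  assumes "test_fun D \<phi>" "test_fun D \<psi>"
  shows "test_fun D (\<lambda>x. a * \<phi> x + b * \<psi> x)"
proof -
  have s: "closure {x. a * \<phi> x + b * \<psi> x \<noteq> 0} \<subseteq> closure {x. \<phi> x \<noteq> 0} \<union> closure {x. \<psi> x \<noteq> 0}"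
  proof -
    have "{x. a * \<phi> x + b * \<psi> x \<noteq> 0} \<subseteq> {x. \<phi> x \<noteq> 0} \<union> {x. \<psi> x \<noteq> 0}" by auto
    then have "closure {x. a * \<phi> x + b * \<psi> x \<noteq> 0} \<subseteq> closure ({x. \<phi> x \<noteq> 0} \<union> {x. \<psi> x \<noteq> 0})"
      by (rule closure_mono)
    then show ?thesis by (simp add: closure_Un)
  qed
  have c: "compact (closure {x. \<phi> x \<noteq> 0} \<union> closure {x. \<psi> x \<noteq> 0})"
    using assms unfolding test_fun_def by (intro compact_Un) auto
  have "compact (closure {x. a * \<phi> x + b * \<psi> x \<noteq> 0})"
    using compact_Int_closed[OF c closed_closure, of "{x. a * \<phi> x + b * \<psi> x \<noteq> 0}"] s
    by (simp add: Int_absorb1)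
  then show ?thesis using assms s smooth_lin unfolding test_fun_def by blast
qed

context
  fixes D :: "'a::euclidean_space set"
  assumes Dopen: "open D" and Dbdd: "bounded D" and Dne: "D \<noteq> {}"
begin

lemma test_L2: assumes "test_fun D \<phi>" shows "L2 D \<phi>"
proof -
  have sm: "smooth \<phi>" using assms unfolding test_fun_def by blast
  have "set [] \<subseteq> (Basis::'a set)" by simp
  then have "continuous_on UNIV (iter_dpart [] \<phi>)" using sm unfolding smooth_def by blast
  then have "continuous_on UNIV \<phi>" by simp
  then have "continuous_on (closure D) \<phi>" using continuous_on_subset subset_UNIV by blast
  then show ?thesis using L2_cont[OF Dopen Dbdd Dne] by blast
qed

lemma test_dL2: assumes "test_fun D \<phi>" "i \<in> Basis" shows "L2 D (dpart i \<phi>)"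
proof -
  have sm: "smooth \<phi>" using assms unfolding test_fun_def by blast
  have "set [i] \<subseteq> Basis" using assms by simp
  then have "continuous_on UNIV (iter_dpart [i] \<phi>)" using sm unfolding smooth_def by blast
  then have "continuous_on UNIV (dpart i \<phi>)" by simp
  then have "continuous_on (closure D) (dpart i \<phi>)" using continuous_on_subset subset_UNIV by blast
  then show ?thesis using L2_cont[OF Dopen Dbdd Dne] by blast
qed

lemma weak_lin:
  assumes "L2 D u" "L2 D w" "L2 D v" "L2 D z" "weak_deriv D u i v" "weak_deriv D w i z" "i \<in> Basis"
  shows "weak_deriv D (\<lambda>x. a * u x + b * w x) i (\<lambda>x. a * v x + b * z x)"
  unfolding weak_deriv_def L2inner_def[symmetric]
proof (intro allI impI)
  fix \<phi> assume t: "test_fun D \<phi>"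
  note L = L2inner_lin[OF Dopen Dbdd Dne]
  have e1: "L2inner D u (dpart i \<phi>) = - L2inner D v \<phi>"
    using assms(5) t unfolding weak_deriv_def L2inner_def by blast
  have e2: "L2inner D w (dpart i \<phi>) = - L2inner D z \<phi>"
    using assms(6) t unfolding weak_deriv_def L2inner_def by blast
  show "L2inner D (\<lambda>x. a * u x + b * w x) (dpart i \<phi>) = - L2inner D (\<lambda>x. a * v x + b * z x) \<phi>"
    using L[OF assms(1,2) test_dL2[OF t assms(7)]] L[OF assms(3,4) test_L2[OF t]] e1 e2
    by (simp add: algebra_simps)
qed

lemma wgrad_lin:
  assumes "L2 D u" "L2 D w" "wgrad D u g" "wgrad D w h"
  shows "wgrad D (\<lambda>x. a * u x + b * w x) (\<lambda>i x. a * g i x + b * h i x)"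
  unfolding wgrad_def
proof
  fix i :: 'a assume i: "i \<in> Basis"
  have g: "L2 D (g i)" "weak_deriv D u i (g i)" using assms(3) i unfolding wgrad_def by auto
  have h: "L2 D (h i)" "weak_deriv D w i (h i)" using assms(4) i unfolding wgrad_def by auto
  show "L2 D (\<lambda>x. a * g i x + b * h i x) \<and> weak_deriv D (\<lambda>x. a * u x + b * w x) i (\<lambda>x. a * g i x + b * h i x)"
    using L2_lin[OF Dopen Dbdd Dne g(1) h(1)] weak_lin[OF assms(1,2) g(1) h(1) g(2) h(2) i] by blast
qed

lemma H01_L2: "H01 D v \<Longrightarrow> L2 D v"
  unfolding H01_def by blast


lemma wgrad_L2: "wgrad D u g \<Longrightarrow> i \<in> Basis \<Longrightarrow> L2 D (g i)"
  unfolding wgrad_def by blast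

lemma H01_lin:
  assumes "H01 D u" "H01 D w"
  shows "H01 D (\<lambda>x. a * u x + b * w x)"
proof -
  obtain g where uL: "L2 D u" and g: "wgrad D u g" and ga: "\<forall>\<epsilon>>0. \<exists>\<phi>. test_fun D \<phi> \<and>
         L2sq D (\<lambda>x. u x - \<phi> x) + (\<Sum>i\<in>Basis. L2sq D (\<lambda>x. g i x - dpart i \<phi> x)) < \<epsilon>"
    using assms(1) unfolding H01_def by blast
  obtain h where wL: "L2 D w" and h: "wgrad D w h" and ha: "\<forall>\<epsilon>>0. \<exists>\<phi>. test_fun D \<phi> \<and>
         L2sq D (\<lambda>x. w x - \<phi> x) + (\<Sum>i\<in>Basis. L2sq D (\<lambda>x. h i x - dpart i \<phi> x)) < \<epsilon>"
    using assms(2) unfolding H01_def by blast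
  let ?U = "\<lambda>x. a * u x + b * w x"
  let ?G = "\<lambda>i x. a * g i x + b * h i x"
  have UL: "L2 D ?U" using L2_lin[OF Dopen Dbdd Dne uL wL] .
  have UG: "wgrad D ?U ?G" using wgrad_lin[OF uL wL g h] .
  have "\<forall>\<epsilon>>0. \<exists>\<phi>. test_fun D \<phi> \<and>
         L2sq D (\<lambda>x. ?U x - \<phi> x) + (\<Sum>i\<in>Basis. L2sq D (\<lambda>x. ?G i x - dpart i \<phi> x)) < \<epsilon>"
  proof (intro allI impI)
    fix \<epsilon> :: real assume ep: "\<epsilon> > 0"
    define c where "c = 2*a^2 + 2*b^2 + 1"
    have c: "c > 0" unfolding c_def by (simp add: add_nonneg_pos)
    then have ec: "\<epsilon> / c > 0" using ep by simp
    obtain \<phi> where t\<phi>: "test_fun D \<phi>" and a1: "L2sq D (\<lambda>x. u x - \<phi> x) + (\<Sum>i\<in>Basis. L2sq D (\<lambda>x. g i x - dpart i \<phi> x)) < \<epsilon> / c"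
      using ga ec by blast
    obtain \<psi> where t\<psi>: "test_fun D \<psi>" and a2: "L2sq D (\<lambda>x. w x - \<psi> x) + (\<Sum>i\<in>Basis. L2sq D (\<lambda>x. h i x - dpart i \<psi> x)) < \<epsilon> / c"
      using ha ec by blast
    define \<Phi> where "\<Phi> = (\<lambda>x. a * \<phi> x + b * \<psi> x)"
    have t\<Phi>: "test_fun D \<Phi>" unfolding \<Phi>_def using test_lin[OF t\<phi> t\<psi>] .
    have sm: "smooth \<phi>" "smooth \<psi>" using t\<phi> t\<psi> unfolding test_fun_def by blast+
    have d\<Phi>: "dpart i \<Phi> = (\<lambda>x. a * dpart i \<phi> x + b * dpart i \<psi> x)" if "i \<in> Basis" for i
      unfolding \<Phi>_def using dpart_lin[OF sm that] .
    note LD = L2_diff[OF Dopen Dbdd Dne]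
    note SQ = L2sq_lin_le[OF Dopen Dbdd Dne]
    have e1: "L2sq D (\<lambda>x. ?U x - \<Phi> x) \<le> 2*a^2*L2sq D (\<lambda>x. u x - \<phi> x) + 2*b^2*L2sq D (\<lambda>x. w x - \<psi> x)"
    proof -
      have "(\<lambda>x. ?U x - \<Phi> x) = (\<lambda>x. a * (u x - \<phi> x) + b * (w x - \<psi> x))"
        by (auto simp: \<Phi>_def algebra_simps)
      then show ?thesis using SQ[OF LD[OF uL test_L2[OF t\<phi>]] LD[OF wL test_L2[OF t\<psi>]], of a b] by simp
    qed
    have e2: "L2sq D (\<lambda>x. ?G i x - dpart i \<Phi> x) \<le> 2*a^2*L2sq D (\<lambda>x. g i x - dpart i \<phi> x) + 2*b^2*L2sq D (\<lambda>x. h i x - dpart i \<psi> x)"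
      if i: "i \<in> Basis" for i
    proof -
      have "(\<lambda>x. ?G i x - dpart i \<Phi> x) = (\<lambda>x. a * (g i x - dpart i \<phi> x) + b * (h i x - dpart i \<psi> x))"
        using d\<Phi>[OF i] by (auto simp: algebra_simps)
      then show ?thesis using SQ[OF LD[OF wgrad_L2[OF g i] test_dL2[OF t\<phi> i]] LD[OF wgrad_L2[OF h i] test_dL2[OF t\<psi> i]], of a b] by simp
    qed
    have e3: "(\<Sum>i\<in>Basis. L2sq D (\<lambda>x. ?G i x - dpart i \<Phi> x)) \<le>
       2*a^2*(\<Sum>i\<in>Basis. L2sq D (\<lambda>x. g i x - dpart i \<phi> x)) + 2*b^2*(\<Sum>i\<in>Basis. L2sq D (\<lambda>x. h i x - dpart i \<psi> x))"
    proof -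
      have "(\<Sum>i\<in>Basis. L2sq D (\<lambda>x. ?G i x - dpart i \<Phi> x)) \<le>
         (\<Sum>i\<in>Basis. 2*a^2*L2sq D (\<lambda>x. g i x - dpart i \<phi> x) + 2*b^2*L2sq D (\<lambda>x. h i x - dpart i \<psi> x))"
        using e2 by (rule sum_mono)
      also have "\<dots> = 2*a^2*(\<Sum>i\<in>Basis. L2sq D (\<lambda>x. g i x - dpart i \<phi> x)) + 2*b^2*(\<Sum>i\<in>Basis. L2sq D (\<lambda>x. h i x - dpart i \<psi> x))"
        by (simp add: sum.distrib sum_distrib_left)
      finally show ?thesis .
    qed
    define A1 where "A1 = L2sq D (\<lambda>x. u x - \<phi> x) + (\<Sum>i\<in>Basis. L2sq D (\<lambda>x. g i x - dpart i \<phi> x))"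
    define A2 where "A2 = L2sq D (\<lambda>x. w x - \<psi> x) + (\<Sum>i\<in>Basis. L2sq D (\<lambda>x. h i x - dpart i \<psi> x))"
    have tot: "L2sq D (\<lambda>x. ?U x - \<Phi> x) + (\<Sum>i\<in>Basis. L2sq D (\<lambda>x. ?G i x - dpart i \<Phi> x)) \<le> 2*a^2*A1 + 2*b^2*A2"
      using e1 e3 unfolding A1_def A2_def by (simp add: algebra_simps)
    have "2*a^2*A1 \<le> 2*a^2*(\<epsilon>/c)" using a1 unfolding A1_def by (intro mult_left_mono) auto
    moreover have "2*b^2*A2 \<le> 2*b^2*(\<epsilon>/c)" using a2 unfolding A2_def by (intro mult_left_mono) auto
    moreover have "2*a^2*(\<epsilon>/c) + 2*b^2*(\<epsilon>/c) < \<epsilon>"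
    proof -
      have "2*a^2*(\<epsilon>/c) + 2*b^2*(\<epsilon>/c) = (c - 1) * (\<epsilon>/c)" unfolding c_def by (simp add: algebra_simps add_divide_distrib)
      also have "\<dots> < c * (\<epsilon>/c)" using ec by (intro mult_strict_right_mono) auto
      also have "\<dots> = \<epsilon>" using c by simp
      finally show ?thesis .
    qed
    ultimately have "L2sq D (\<lambda>x. ?U x - \<Phi> x) + (\<Sum>i\<in>Basis. L2sq D (\<lambda>x. ?G i x - dpart i \<Phi> x)) < \<epsilon>"
      using tot by linarith
    then show "\<exists>\<phi>. test_fun D \<phi> \<and>
         L2sq D (\<lambda>x. ?U x - \<phi> x) + (\<Sum>i\<in>Basis. L2sq D (\<lambda>x. ?G i x - dpart i \<phi> x)) < \<epsilon>"
      using t\<Phi> by blast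
  qed
  then show ?thesis unfolding H01_def using UL UG by blast
qed

context
  fixes k :: "'a \<Rightarrow> real" and B :: real
  assumes kmeas: "k \<in> borel_measurable (lebesgue_on D)" and kB: "\<And>x. x \<in> D \<Longrightarrow> \<bar>k x\<bar> \<le> B"
begin

lemma int_kgg:
  fixes g gv :: "'a \<Rightarrow> 'a \<Rightarrow> real"
  assumes "\<And>i. i \<in> Basis \<Longrightarrow> L2 D (g i)" "\<And>i. i \<in> Basis \<Longrightarrow> L2 D (gv i)"
  shows "integrable (lebesgue_on D) (\<lambda>x. k x * (\<Sum>i\<in>Basis. g i x * gv i x))"
proof -
  have e: "(\<lambda>x. k x * (\<Sum>i\<in>Basis. g i x * gv i x)) = (\<lambda>x. \<Sum>i\<in>Basis. (k x * g i x) * gv i x)"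
    by (simp add: sum_distrib_left mult.assoc)
  have "integrable (lebesgue_on D) (\<lambda>x. \<Sum>i\<in>Basis. (k x * g i x) * gv i x)"
  proof (rule Bochner_Integration.integrable_sum)
    fix i :: 'a assume i: "i \<in> Basis"
    show "integrable (lebesgue_on D) (\<lambda>x. (k x * g i x) * gv i x)"
      using L2_prod[OF Dopen Dbdd Dne L2_bdd_mult[OF Dopen Dbdd Dne assms(1)[OF i] kmeas kB] assms(2)[OF i]] .
  qed
  then show ?thesis using e by simp
qed

lemma solves_lin:
  assumes uL: "L2 D u" and wL: "L2 D w" and s1: "solves D k u y1" and s2: "solves D k w y2"
  shows "solves D k (\<lambda>x. a * u x + b * w x) (\<lambda>x. a * y1 x + b * y2 x)"
proof -
  obtain g1 where y1: "H01 D y1" and g1: "wgrad D y1 g1" and eq1: "\<And>v gv. H01 D v \<Longrightarrow> wgrad D v gv \<Longrightarrow>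
        (LINT x|lebesgue_on D. k x * (\<Sum>i\<in>Basis. g1 i x * gv i x)) = L2inner D u v"
    using s1 unfolding solves_def by blast
  obtain g2 where y2: "H01 D y2" and g2: "wgrad D y2 g2" and eq2: "\<And>v gv. H01 D v \<Longrightarrow> wgrad D v gv \<Longrightarrow>
        (LINT x|lebesgue_on D. k x * (\<Sum>i\<in>Basis. g2 i x * gv i x)) = L2inner D w v"
    using s2 unfolding solves_def by blast
  let ?G = "\<lambda>i x. a * g1 i x + b * g2 i x"
  have H: "H01 D (\<lambda>x. a * y1 x + b * y2 x)" using H01_lin[OF y1 y2] .
  have W: "wgrad D (\<lambda>x. a * y1 x + b * y2 x) ?G" using wgrad_lin[OF H01_L2[OF y1] H01_L2[OF y2] g1 g2] .
  have E: "(LINT x|lebesgue_on D. k x * (\<Sum>i\<in>Basis. ?G i x * gv i x)) = L2inner D (\<lambda>x. a * u x + b * w x) v"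
    if v: "H01 D v" and gv: "wgrad D v gv" for v gv
  proof -
    have pt: "(\<lambda>x. k x * (\<Sum>i\<in>Basis. ?G i x * gv i x)) =
       (\<lambda>x. a * (k x * (\<Sum>i\<in>Basis. g1 i x * gv i x)) + b * (k x * (\<Sum>i\<in>Basis. g2 i x * gv i x)))"
    proof
      fix x
      have "(\<Sum>i\<in>Basis. ?G i x * gv i x) = a * (\<Sum>i\<in>Basis. g1 i x * gv i x) + b * (\<Sum>i\<in>Basis. g2 i x * gv i x)"
        by (simp add: distrib_right sum.distrib sum_distrib_left mult.assoc)
      then show "k x * (\<Sum>i\<in>Basis. ?G i x * gv i x) =
         a * (k x * (\<Sum>i\<in>Basis. g1 i x * gv i x)) + b * (k x * (\<Sum>i\<in>Basis. g2 i x * gv i x))"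
        by (simp add: algebra_simps)
    qed
    have i1: "integrable (lebesgue_on D) (\<lambda>x. k x * (\<Sum>i\<in>Basis. g1 i x * gv i x))"
      using int_kgg[of g1 gv] wgrad_L2[OF g1] wgrad_L2[OF gv] by blast
    have i2: "integrable (lebesgue_on D) (\<lambda>x. k x * (\<Sum>i\<in>Basis. g2 i x * gv i x))"
      using int_kgg[of g2 gv] wgrad_L2[OF g2] wgrad_L2[OF gv] by blast
    have "(LINT x|lebesgue_on D. k x * (\<Sum>i\<in>Basis. ?G i x * gv i x)) =
        a * (LINT x|lebesgue_on D. k x * (\<Sum>i\<in>Basis. g1 i x * gv i x)) + b * (LINT x|lebesgue_on D. k x * (\<Sum>i\<in>Basis. g2 i x * gv i x))"
      unfolding pt using i1 i2 by simp
    also have "\<dots> = a * L2inner D u v + b * L2inner D w v" using eq1[OF v gv] eq2[OF v gv] by simp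
    also have "\<dots> = L2inner D (\<lambda>x. a * u x + b * w x) v"
      using L2inner_lin[OF Dopen Dbdd Dne uL wL H01_L2[OF v]] by simp
    finally show ?thesis .
  qed
  show ?thesis unfolding solves_def using H W E by blast
qed

end


lemma Linf_AE: assumes "Linfnorm D f \<le> ereal r" shows "AE x in lebesgue_on D. \<bar>f x\<bar> \<le> r"
proof -
  have "AE x in lebesgue_on D. ereal \<bar>f x\<bar> \<le> Linfnorm D f"
    unfolding Linfnorm_def by (rule esssup_AE)
  then show ?thesis
  proof (rule AE_mp)
    show "AE x in lebesgue_on D. ereal \<bar>f x\<bar> \<le> Linfnorm D f \<longrightarrow> \<bar>f x\<bar> \<le> r"
    proof (intro AE_I2 impI)
      fix x assume "ereal \<bar>f x\<bar> \<le> Linfnorm D f"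
      then have "ereal \<bar>f x\<bar> \<le> ereal r" using assms by (rule order_trans)
      then show "\<bar>f x\<bar> \<le> r" by simp
    qed
  qed
qed

lemma Linf_cong: assumes "f \<in> borel_measurable (lebesgue_on D)" "g \<in> borel_measurable (lebesgue_on D)"
  "AE x in lebesgue_on D. f x = g x" shows "Linfnorm D f = Linfnorm D g"
proof -
  have [measurable]: "f \<in> borel_measurable (lebesgue_on D)" "g \<in> borel_measurable (lebesgue_on D)" using assms by auto
  show ?thesis unfolding Linfnorm_def
    by (rule esssup_AE_cong) (use assms(3) in \<open>auto elim!: AE_mp\<close>)
qed

lemma Linf_zero: assumes "f \<in> borel_measurable (lebesgue_on D)" "AE x in lebesgue_on D. f x = 0"
  shows "Linfnorm D f \<le> 0"
proof -
  have [measurable]: "f \<in> borel_measurable (lebesgue_on D)" using assms by auto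
  show ?thesis unfolding Linfnorm_def
    by (rule esssup_I) (use assms(2) in \<open>auto elim!: AE_mp\<close>)
qed

lemma L2_scale: "L2 D f \<Longrightarrow> L2 D (\<lambda>x. t * f x)"
  using L2_lin[OF Dopen Dbdd Dne, of f f t 0] by simp

lemma L2inner_scale: "L2inner D g (\<lambda>x. t * f x) = t * L2inner D g f"
  unfolding L2inner_def by (simp add: mult.left_commute)

lemma L2inner_add: "L2inner D g (\<lambda>x. f x + h x) = L2inner D g f + L2inner D g h" if "L2 D g" "L2 D f" "L2 D h"
proof -
  have "L2inner D g (\<lambda>x. f x + h x) = L2inner D (\<lambda>x. f x + h x) g" by (rule L2inner_comm[OF Dopen Dbdd Dne])
  also have "\<dots> = L2inner D f g + L2inner D h g" using L2inner_lin[OF Dopen Dbdd Dne, of f h g 1 1] that by simp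
  also have "\<dots> = L2inner D g f + L2inner D g h" using L2inner_comm[OF Dopen Dbdd Dne, of f g] L2inner_comm[OF Dopen Dbdd Dne, of h g] by simp
  finally show ?thesis .
qed

lemma L1_nonneg: "0 \<le> L1norm D f"
  unfolding L1norm_def by (simp add: integral_nonneg_AE)

lemma real_eps_le0: fixes x M :: real assumes "\<And>\<epsilon>. \<epsilon> > 0 \<Longrightarrow> x \<le> \<epsilon> * M" shows "x \<le> 0"
proof (rule ccontr)
  assume x: "\<not> x \<le> 0"
  show False
  proof (cases "M \<le> 0")
    case True then show False using assms[of 1] x by simp
  next
    case False
    then have "x \<le> (x / (2*M)) * M" using assms[of "x/(2*M)"] x by simp
    also have "\<dots> = x / 2" using False by simp
    finally show False using x by simp
  qed
qed

lemma real_small_t: fixes x M \<eta> :: real assumes "\<And>t. 0 < t \<Longrightarrow> t < \<eta> \<Longrightarrow> x \<le> t * M" "0 < \<eta>"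
  shows "x \<le> 0"
proof (rule ccontr)
  assume "\<not> x \<le> 0"
  then have x: "x > 0" by simp
  define t where "t = min (\<eta>/2) (x/(2*(\<bar>M\<bar>+1)))"
  have t: "0 < t" "t < \<eta>" using x assms(2) by (auto simp: t_def)
  have "x \<le> t * M" using assms(1)[OF t] .
  also have "\<dots> \<le> t * \<bar>M\<bar>" using t(1) by (intro mult_left_mono) auto
  also have "\<dots> \<le> (x/(2*(\<bar>M\<bar>+1))) * \<bar>M\<bar>" by (intro mult_right_mono) (auto simp: t_def)
  also have "\<dots> < x"
  proof -
    have "(x/(2*(\<bar>M\<bar>+1))) * \<bar>M\<bar> = x * (\<bar>M\<bar> / (2*(\<bar>M\<bar>+1)))" by simp
    also have "\<dots> < x * 1"
    proof (rule mult_strict_left_mono)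
      show "\<bar>M\<bar> / (2*(\<bar>M\<bar>+1)) < 1" by (simp add: field_simps)
    qed (use x in auto)
    finally show ?thesis by simp
  qed
  finally show False by simp
qed


lemma grad_unique:
  assumes g1: "L2_gradient D F u G1" and g2: "L2_gradient D F u G2"
  shows "AE x in lebesgue_on D. G1 x = G2 x"
proof -
  have G1L: "L2 D G1" and G2L: "L2 D G2" using g1 g2 unfolding L2_gradient_def by auto
  define d where "d = (\<lambda>x. G1 x - G2 x)"
  have dL: "L2 D d" unfolding d_def using L2_diff[OF Dopen Dbdd Dne G1L G2L] .
  have nd: "0 \<le> L2norm D d" by (rule L2norm_nonneg[OF Dopen Dbdd Dne])
  have bnd: "L2norm D d \<le> \<epsilon> * 2" if ep: "\<epsilon> > 0" for \<epsilon>
  proof -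
    obtain \<delta>1 where d1: "\<delta>1 > 0" and h1: "\<And>h. L2 D h \<and> L2norm D h < \<delta>1 \<Longrightarrow>
       \<bar>F (\<lambda>x. u x + h x) - F u - L2inner D G1 h\<bar> \<le> \<epsilon> * L2norm D h"
      using g1 ep unfolding L2_gradient_def by meson
    obtain \<delta>2 where d2: "\<delta>2 > 0" and h2: "\<And>h. L2 D h \<and> L2norm D h < \<delta>2 \<Longrightarrow>
       \<bar>F (\<lambda>x. u x + h x) - F u - L2inner D G2 h\<bar> \<le> \<epsilon> * L2norm D h"
      using g2 ep unfolding L2_gradient_def by meson
    define \<delta> where "\<delta> = min \<delta>1 \<delta>2"
    have d: "\<delta> > 0" using d1 d2 by (simp add: \<delta>_def)
    define t where "t = \<delta> / (2 * (L2norm D d + 1))"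
    have t: "t > 0" unfolding t_def using d nd by simp
    define h where "h = (\<lambda>x. t * d x)"
    have hL: "L2 D h" unfolding h_def by (rule L2_scale[OF dL])
    have hn: "L2norm D h = t * L2norm D d" unfolding h_def L2norm_scale[OF Dopen Dbdd Dne] using t by simp
    have "t * L2norm D d < \<delta>"
    proof -
      have "t * L2norm D d = \<delta> * (L2norm D d / (2 * (L2norm D d + 1)))" unfolding t_def by simp
      also have "\<dots> < \<delta> * 1" using d nd by (intro mult_strict_left_mono) (auto simp: field_simps)
      finally show ?thesis by simp
    qed
    then have hs1: "L2norm D h < \<delta>1" and hs2: "L2norm D h < \<delta>2" using hn by (auto simp: \<delta>_def)
    have "\<bar>L2inner D G1 h - L2inner D G2 h\<bar> \<le> \<epsilon> * L2norm D h + \<epsilon> * L2norm D h"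
      using h1[of h] h2[of h] hL hs1 hs2 by linarith
    moreover have "L2inner D G1 h - L2inner D G2 h = t * (L2norm D d)^2"
    proof -
      have "L2inner D G1 h - L2inner D G2 h = L2inner D d h"
        using L2inner_lin[OF Dopen Dbdd Dne G1L G2L hL, of 1 "-1"] unfolding d_def by simp
      also have "\<dots> = t * L2inner D d d" unfolding h_def by (rule L2inner_scale)
      also have "\<dots> = t * (L2norm D d)^2"
        using L2sq_inner[OF Dopen Dbdd Dne, of d] L2sq_eq[OF Dopen Dbdd Dne, of d] by simp
      finally show ?thesis .
    qed
    ultimately have "t * (L2norm D d)^2 \<le> t * (\<epsilon> * 2 * L2norm D d)" using hn t by (simp add: algebra_simps)
    then have "(L2norm D d)^2 \<le> \<epsilon> * 2 * L2norm D d" using t by simp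
    then show ?thesis
    proof (cases "L2norm D d = 0")
      case True then show ?thesis using ep by simp
    next
      case False
      then have "L2norm D d > 0" using nd by simp
      then show ?thesis using \<open>(L2norm D d)^2 \<le> \<epsilon> * 2 * L2norm D d\<close> by (simp add: power2_eq_square)
    qed
  qed
  have "L2norm D d \<le> 0" using real_eps_le0[of "L2norm D d" 2] bnd by blast
  then have "L2sq D d = 0" using nd L2sq_eq[OF Dopen Dbdd Dne, of d] by simp
  then have "AE x in lebesgue_on D. d x = 0" using L2sq_zero_AE[OF Dopen Dbdd Dne dL] by blast
  then show ?thesis unfolding d_def by (auto elim!: AE_mp)
qed


lemma zero_grad:
  fixes P :: "('a \<Rightarrow> real) \<Rightarrow> bool"
  assumes Plin: "\<And>u w a b. P u \<Longrightarrow> P w \<Longrightarrow> P (\<lambda>x. a * u x + b * w x)"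
    and u0L: "L2 D u0" and u0P: "\<not> P u0"
    and FK: "\<And>u. L2 D u \<Longrightarrow> \<not> P u \<Longrightarrow> F u = K"
    and u1L: "L2 D u1" and G: "L2_gradient D F u1 G"
  shows "AE x in lebesgue_on D. G x = 0"
proof -
  have GL: "L2 D G" using G unfolding L2_gradient_def by auto
  have grad: "\<exists>\<delta>>0. \<forall>h. L2 D h \<and> L2norm D h < \<delta> \<longrightarrow>
      \<bar>F (\<lambda>x. u1 x + h x) - F u1 - L2inner D G h\<bar> \<le> \<epsilon> * L2norm D h" if "\<epsilon> > 0" for \<epsilon>
    using G that unfolding L2_gradient_def by blast
  note nn = L2norm_nonneg[OF Dopen Dbdd Dne]
  note sc = L2norm_scale[OF Dopen Dbdd Dne]
  have step1: "F u1 = K"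
  proof (cases "P u1")
    case False then show ?thesis using FK u1L by simp
  next
    case True
    obtain \<delta> where d: "\<delta> > 0" and hd: "\<forall>h. L2 D h \<and> L2norm D h < \<delta> \<longrightarrow>
      \<bar>F (\<lambda>x. u1 x + h x) - F u1 - L2inner D G h\<bar> \<le> 1 * L2norm D h"
      using grad[of 1] by auto
    define M where "M = L2norm D u0 + \<bar>L2inner D G u0\<bar>"
    define \<eta> where "\<eta> = \<delta> / (L2norm D u0 + 1)"
    have "\<bar>K - F u1\<bar> \<le> 0"
    proof (rule real_small_t[where M=M and \<eta>=\<eta>])
      show "0 < \<eta>" unfolding \<eta>_def using d nn[of u0] by simp
      fix t :: real assume t: "0 < t" "t < \<eta>"
      let ?h = "\<lambda>x. t * u0 x"
      have hL: "L2 D ?h" by (rule L2_scale[OF u0L])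
      have hn: "L2norm D ?h = t * L2norm D u0" using sc t by simp
      have "t * L2norm D u0 \<le> \<eta> * L2norm D u0" using t nn[of u0] by (intro mult_right_mono) auto
      also have "\<eta> * L2norm D u0 = \<delta> * (L2norm D u0 / (L2norm D u0 + 1))" unfolding \<eta>_def by simp
      also have "\<dots> < \<delta> * 1" using d nn[of u0] by (intro mult_strict_left_mono) auto
      finally have hs: "L2norm D ?h < \<delta>" using hn by simp
      have nP: "\<not> P (\<lambda>x. u1 x + ?h x)"
      proof
        assume "P (\<lambda>x. u1 x + t * u0 x)"
        then have "P (\<lambda>x. (1/t) * (u1 x + t * u0 x) + (-1/t) * u1 x)" using Plin True by blast
        moreover have "(\<lambda>x. (1/t) * (u1 x + t * u0 x) + (-1/t) * u1 x) = u0"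
          using t by (intro ext) (simp add: field_simps)
        ultimately show False using u0P by simp
      qed
      have FK1: "F (\<lambda>x. u1 x + ?h x) = K" using FK[OF L2_add[OF Dopen Dbdd Dne u1L hL] nP] .
      have "\<bar>K - F u1 - L2inner D G ?h\<bar> \<le> L2norm D ?h" using hd hL hs FK1 by auto
      then have "\<bar>K - F u1 - t * L2inner D G u0\<bar> \<le> t * L2norm D u0"
        using hn L2inner_scale[of G t u0] by simp
      moreover have "\<bar>t * L2inner D G u0\<bar> = t * \<bar>L2inner D G u0\<bar>" using t by (simp add: abs_mult)
      ultimately show "\<bar>K - F u1\<bar> \<le> t * M" unfolding M_def by (simp add: algebra_simps)
    qed
    then show ?thesis by simp
  qed
  have core: "\<bar>L2inner D G d\<bar> \<le> \<epsilon> * L2norm D d"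
    if dL: "L2 D d" and s: "s > 0" "s * L2norm D d < \<delta>" and nP: "\<not> P (\<lambda>x. u1 x + s * d x)"
      and hd: "\<forall>h. L2 D h \<and> L2norm D h < \<delta> \<longrightarrow>
      \<bar>F (\<lambda>x. u1 x + h x) - F u1 - L2inner D G h\<bar> \<le> \<epsilon> * L2norm D h" for d s \<delta> \<epsilon>
  proof -
    let ?h = "\<lambda>x. s * d x"
    have hL: "L2 D ?h" by (rule L2_scale[OF dL])
    have hn: "L2norm D ?h = s * L2norm D d" using sc s by simp
    have FK1: "F (\<lambda>x. u1 x + ?h x) = K" using FK[OF L2_add[OF Dopen Dbdd Dne u1L hL] nP] .
    have "\<bar>K - F u1 - L2inner D G ?h\<bar> \<le> \<epsilon> * L2norm D ?h" using hd hL hn s FK1 by auto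
    then have "\<bar>s * L2inner D G d\<bar> \<le> s * (\<epsilon> * L2norm D d)"
      using hn step1 L2inner_scale[of G s d] by (simp add: algebra_simps)
    then have "s * \<bar>L2inner D G d\<bar> \<le> s * (\<epsilon> * L2norm D d)" using s by (simp add: abs_mult)
    then show ?thesis using s by simp
  qed
  have key: "\<exists>M. \<forall>\<epsilon>>0. \<bar>L2inner D G d\<bar> \<le> \<epsilon> * M" if dL: "L2 D d" for d
  proof (cases "P u1")
    case False
    show ?thesis
    proof (intro exI allI impI)
      fix \<epsilon> :: real assume ep: "\<epsilon> > 0"
      obtain \<delta> where d: "\<delta> > 0" and hd: "\<forall>h. L2 D h \<and> L2norm D h < \<delta> \<longrightarrow>
        \<bar>F (\<lambda>x. u1 x + h x) - F u1 - L2inner D G h\<bar> \<le> \<epsilon> * L2norm D h"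
        using grad[OF ep] by auto
      define t where "t = \<delta> / (2 * (L2norm D d + 1))"
      have t: "t > 0" unfolding t_def using d nn[of d] by simp
      have t2: "(2 * t) * L2norm D d < \<delta>"
      proof -
        have pp: "L2norm D d + 1 > 0" using nn[of d] by simp
        have "(2 * t) * L2norm D d = \<delta> * (L2norm D d / (L2norm D d + 1))" unfolding t_def using pp by (simp add: field_simps)
        also have "\<dots> < \<delta> * 1" using d nn[of d] by (intro mult_strict_left_mono) auto
        finally show ?thesis by simp
      qed
      have t1: "t * L2norm D d < \<delta>" using t2 t nn[of d] by (smt (verit) mult_right_mono)
      have "\<not> P (\<lambda>x. u1 x + t * d x) \<or> \<not> P (\<lambda>x. u1 x + (2 * t) * d x)"
      proof (rule ccontr)
        assume "\<not> ?thesis"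
        then have "P (\<lambda>x. u1 x + t * d x)" "P (\<lambda>x. u1 x + (2 * t) * d x)" by auto
        then have "P (\<lambda>x. 2 * (u1 x + t * d x) + (-1) * (u1 x + (2 * t) * d x))" using Plin by blast
        moreover have "(\<lambda>x. 2 * (u1 x + t * d x) + (-1) * (u1 x + (2 * t) * d x)) = u1"
          by (intro ext) (simp add: algebra_simps)
        ultimately show False using False by simp
      qed
      then show "\<bar>L2inner D G d\<bar> \<le> \<epsilon> * L2norm D d"
      proof
        assume "\<not> P (\<lambda>x. u1 x + t * d x)"
        then show ?thesis using core[OF dL t t1 _ hd] by blast
      next
        assume "\<not> P (\<lambda>x. u1 x + (2 * t) * d x)"
        moreover have "2 * t > 0" using t by simp
        ultimately show ?thesis using core[OF dL _ t2 _ hd] by blast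
      qed
    qed
  next
    case True
    have nPd: "\<bar>L2inner D G e\<bar> \<le> \<epsilon> * L2norm D e" if eL: "L2 D e" and eP: "\<not> P e" and ep: "\<epsilon> > 0" for e \<epsilon>
    proof -
      obtain \<delta> where d: "\<delta> > 0" and hd: "\<forall>h. L2 D h \<and> L2norm D h < \<delta> \<longrightarrow>
        \<bar>F (\<lambda>x. u1 x + h x) - F u1 - L2inner D G h\<bar> \<le> \<epsilon> * L2norm D h"
        using grad[OF ep] by auto
      define t where "t = \<delta> / (L2norm D e + 1)"
      have t: "t > 0" unfolding t_def using d nn[of e] by simp
      have t1: "t * L2norm D e < \<delta>"
      proof -
        have "t * L2norm D e = \<delta> * (L2norm D e / (L2norm D e + 1))" unfolding t_def by simp
        also have "\<dots> < \<delta> * 1" using d nn[of e] by (intro mult_strict_left_mono) auto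
        finally show ?thesis by simp
      qed
      have "\<not> P (\<lambda>x. u1 x + t * e x)"
      proof
        assume "P (\<lambda>x. u1 x + t * e x)"
        then have "P (\<lambda>x. (1/t) * (u1 x + t * e x) + (-1/t) * u1 x)" using Plin True by blast
        moreover have "(\<lambda>x. (1/t) * (u1 x + t * e x) + (-1/t) * u1 x) = e"
          using t by (intro ext) (simp add: field_simps)
        ultimately show False using eP by simp
      qed
      then show ?thesis using core[OF eL t t1 _ hd] by blast
    qed
    show ?thesis
    proof (cases "P d")
      case False then show ?thesis using nPd[OF dL False] by blast
    next
      case Pd: True
      have du: "L2 D (\<lambda>x. d x + u0 x)" using L2_add[OF Dopen Dbdd Dne dL u0L] .
      have nP: "\<not> P (\<lambda>x. d x + u0 x)"
      proof
        assume "P (\<lambda>x. d x + u0 x)"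
        then have "P (\<lambda>x. 1 * (d x + u0 x) + (-1) * d x)" using Plin Pd by blast
        moreover have "(\<lambda>x. 1 * (d x + u0 x) + (-1) * d x) = u0" by (intro ext) simp
        ultimately show False using u0P by simp
      qed
      have add: "L2inner D G (\<lambda>x. d x + u0 x) = L2inner D G d + L2inner D G u0"
        using L2inner_add[OF GL dL u0L] .
      show ?thesis
      proof (intro exI allI impI)
        fix \<epsilon> :: real assume ep: "\<epsilon> > 0"
        have "\<bar>L2inner D G (\<lambda>x. d x + u0 x)\<bar> \<le> \<epsilon> * L2norm D (\<lambda>x. d x + u0 x)" using nPd[OF du nP ep] .
        moreover have "\<bar>L2inner D G u0\<bar> \<le> \<epsilon> * L2norm D u0" using nPd[OF u0L u0P ep] .
        ultimately show "\<bar>L2inner D G d\<bar> \<le> \<epsilon> * (L2norm D (\<lambda>x. d x + u0 x) + L2norm D u0)"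
          using add by (simp add: algebra_simps)
      qed
    qed
  qed
  obtain M where "\<forall>\<epsilon>>0. \<bar>L2inner D G G\<bar> \<le> \<epsilon> * M" using key[OF GL] by blast
  then have "\<bar>L2inner D G G\<bar> \<le> 0" using real_eps_le0 by blast
  then have "L2sq D G = 0" using L2sq_inner[OF Dopen Dbdd Dne, of G] by simp
  then show ?thesis using L2sq_zero_AE[OF Dopen Dbdd Dne GL] by blast
qed


context
  fixes k :: "'a \<Rightarrow> real" and B C A :: real
  assumes kmeas: "k \<in> borel_measurable (lebesgue_on D)" and kB: "\<And>x. x \<in> D \<Longrightarrow> \<bar>k x\<bar> \<le> B"
    and Cnn: "0 \<le> C" and Ann: "0 \<le> A"
    and bnd2: "\<And>u y. L2 D u \<Longrightarrow> solves D k u y \<Longrightarrow> L2norm D y \<le> C * L2norm D u"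
    and bndI: "\<And>u y. L2 D u \<Longrightarrow> solves D k u y \<Longrightarrow> Linfnorm D y \<le> ereal (A * L2norm D u)"
begin

lemma sol_L2: "solves D k u y \<Longrightarrow> L2 D y"
  unfolding solves_def using H01_L2 by blast

lemma sol_unique:
  assumes uL: "L2 D u" and s1: "solves D k u y" and s2: "solves D k u y'"
  shows "AE x in lebesgue_on D. y x = y' x"
proof -
  have "solves D k (\<lambda>x. 1 * u x + (-1) * u x) (\<lambda>x. 1 * y x + (-1) * y' x)"
    using solves_lin[OF kmeas kB uL uL s1 s2] .
  then have s: "solves D k (\<lambda>x. 0) (\<lambda>x. y x - y' x)" by simp
  have zL: "L2 D (\<lambda>x. 0::real)" using L2_bdd[OF Dopen Dbdd Dne, of "\<lambda>x. 0" 0] by simp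
  have z0: "L2norm D (\<lambda>x. 0) = 0" unfolding L2norm_def L2sq_def by simp
  have dL: "L2 D (\<lambda>x. y x - y' x)" using sol_L2[OF s] .
  have "L2norm D (\<lambda>x. y x - y' x) \<le> 0" using bnd2[OF zL s] z0 by simp
  then have "L2sq D (\<lambda>x. y x - y' x) = 0"
    using L2norm_nonneg[OF Dopen Dbdd Dne] L2sq_eq[OF Dopen Dbdd Dne] by (metis antisym power_zero_numeral zero_power2)
  then have "AE x in lebesgue_on D. y x - y' x = 0" using L2sq_zero_AE[OF Dopen Dbdd Dne dL] by blast
  then show ?thesis by (auto elim!: AE_mp)
qed

context
  assumes ex: "\<And>u. L2 D u \<Longrightarrow> \<exists>y. solves D k u y"
begin

lemma T_solves: "L2 D u \<Longrightarrow> solves D k u (ysol D k u)"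
  unfolding ysol_def using someI_ex[OF ex] by blast

lemma T_L2: "L2 D u \<Longrightarrow> L2 D (ysol D k u)"
  using sol_L2[OF T_solves] .

lemma T_lin: assumes "L2 D u" "L2 D w"
  shows "AE x in lebesgue_on D. ysol D k (\<lambda>x. a * u x + b * w x) x = a * ysol D k u x + b * ysol D k w x"
  using sol_unique[OF L2_lin[OF Dopen Dbdd Dne assms] T_solves[OF L2_lin[OF Dopen Dbdd Dne assms]]
      solves_lin[OF kmeas kB assms T_solves[OF assms(1)] T_solves[OF assms(2)]]] .

lemma T_add: assumes "L2 D u" "L2 D w"
  shows "AE x in lebesgue_on D. ysol D k (\<lambda>x. u x + w x) x = ysol D k u x + ysol D k w x"
  using T_lin[OF assms, of 1 1] by simp

lemma T_diff: assumes "L2 D u" "L2 D w"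
  shows "AE x in lebesgue_on D. ysol D k (\<lambda>x. u x - w x) x = ysol D k u x - ysol D k w x"
  using T_lin[OF assms, of 1 "-1"] by simp

lemma T_sym: assumes uL: "L2 D u" and wL: "L2 D w"
  shows "L2inner D u (ysol D k w) = L2inner D w (ysol D k u)"
proof -
  obtain gu where Hu: "H01 D (ysol D k u)" and gu: "wgrad D (ysol D k u) gu" and equ: "\<And>v gv. H01 D v \<Longrightarrow> wgrad D v gv \<Longrightarrow>
        (LINT x|lebesgue_on D. k x * (\<Sum>i\<in>Basis. gu i x * gv i x)) = L2inner D u v"
    using T_solves[OF uL] unfolding solves_def by blast
  obtain gw where Hw: "H01 D (ysol D k w)" and gw: "wgrad D (ysol D k w) gw" and eqw: "\<And>v gv. H01 D v \<Longrightarrow> wgrad D v gv \<Longrightarrow>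
        (LINT x|lebesgue_on D. k x * (\<Sum>i\<in>Basis. gw i x * gv i x)) = L2inner D w v"
    using T_solves[OF wL] unfolding solves_def by blast
  have "L2inner D u (ysol D k w) = (LINT x|lebesgue_on D. k x * (\<Sum>i\<in>Basis. gu i x * gw i x))"
    using equ[OF Hw gw] by simp
  also have "\<dots> = (LINT x|lebesgue_on D. k x * (\<Sum>i\<in>Basis. gw i x * gu i x))"
    by (simp add: mult.commute)
  also have "\<dots> = L2inner D w (ysol D k u)" using eqw[OF Hu gu] .
  finally show ?thesis .
qed

lemma T_dual: assumes zL: "L2 D z"
  shows "L2norm D (ysol D k z) \<le> A * L1norm D z"
proof -
  define y where "y = ysol D k z"
  define y2 where "y2 = ysol D k y"
  have yL: "L2 D y" unfolding y_def using T_L2[OF zL] .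
  have y2L: "L2 D y2" unfolding y2_def using T_L2[OF yL] .
  have sq: "L2sq D y = L2inner D z y2"
    unfolding y2_def using T_sym[OF zL yL] L2sq_inner[OF Dopen Dbdd Dne, of y] unfolding y_def by simp
  define r where "r = A * L2norm D y"
  have r: "0 \<le> r" unfolding r_def using Ann L2norm_nonneg[OF Dopen Dbdd Dne] by simp
  have ae: "AE x in lebesgue_on D. \<bar>y2 x\<bar> \<le> r"
    using Linf_AE[OF bndI[OF yL T_solves[OF yL]]] unfolding y2_def r_def .
  have "L2inner D z y2 \<le> (LINT x|lebesgue_on D. \<bar>z x\<bar> * r)"
    unfolding L2inner_def
  proof (rule integral_mono_AE)
    show "integrable (lebesgue_on D) (\<lambda>x. z x * y2 x)" using L2_prod[OF Dopen Dbdd Dne zL y2L] .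
    show "integrable (lebesgue_on D) (\<lambda>x. \<bar>z x\<bar> * r)"
      using L2_int[OF Dopen Dbdd Dne zL] by (intro integrable_mult_left integrable_abs)
    show "AE x in lebesgue_on D. z x * y2 x \<le> \<bar>z x\<bar> * r"
      using ae
    proof (rule AE_mp)
      show "AE x in lebesgue_on D. \<bar>y2 x\<bar> \<le> r \<longrightarrow> z x * y2 x \<le> \<bar>z x\<bar> * r"
      proof (intro AE_I2 impI)
        fix x assume "\<bar>y2 x\<bar> \<le> r"
        then have "\<bar>z x\<bar> * \<bar>y2 x\<bar> \<le> \<bar>z x\<bar> * r" by (intro mult_left_mono) auto
        moreover have "z x * y2 x \<le> \<bar>z x\<bar> * \<bar>y2 x\<bar>" by (metis abs_ge_self abs_mult)
        ultimately show "z x * y2 x \<le> \<bar>z x\<bar> * r" by linarith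
      qed
    qed
  qed
  also have "\<dots> = r * L1norm D z" unfolding L1norm_def by (simp add: mult.commute)
  finally have "(L2norm D y)^2 \<le> A * L2norm D y * L1norm D z"
    using sq L2sq_eq[OF Dopen Dbdd Dne, of y] unfolding r_def by simp
  then have "L2norm D y * L2norm D y \<le> L2norm D y * (A * L1norm D z)"
    by (simp add: power2_eq_square algebra_simps)
  moreover have "0 \<le> A * L1norm D z" using Ann L1_nonneg by simp
  ultimately have "L2norm D y \<le> A * L1norm D z"
    using L2norm_nonneg[OF Dopen Dbdd Dne, of y]
    by (metis mult_le_cancel_left_pos order_le_less)
  then show ?thesis unfolding y_def .
qed

lemma T_grad:
  assumes uL: "L2 D u" and Jg: "L2_gradient D J (ysol D k u) Gj"
    and Jae: "\<And>v w. L2 D v \<Longrightarrow> L2 D w \<Longrightarrow> AE x in lebesgue_on D. v x = w x \<Longrightarrow> J v = J w"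
  shows "L2_gradient D (\<lambda>v. J (ysol D k v)) u (ysol D k Gj)"
  unfolding L2_gradient_def
proof (intro conjI allI impI)
  have GjL: "L2 D Gj" using Jg unfolding L2_gradient_def by auto
  show "L2 D (ysol D k Gj)" using T_L2[OF GjL] .
  fix \<epsilon> :: real assume ep: "\<epsilon> > 0"
  define e' where "e' = \<epsilon> / (C + 1)"
  have e': "e' > 0" unfolding e'_def using ep Cnn by simp
  obtain \<delta>' where d': "\<delta>' > 0" and hd: "\<forall>h. L2 D h \<and> L2norm D h < \<delta>' \<longrightarrow>
      \<bar>J (\<lambda>x. ysol D k u x + h x) - J (ysol D k u) - L2inner D Gj h\<bar> \<le> e' * L2norm D h"
    using Jg e' unfolding L2_gradient_def by blast
  define \<delta> where "\<delta> = \<delta>' / (C + 1)"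
  have d: "\<delta> > 0" unfolding \<delta>_def using d' Cnn by simp
  show "\<exists>\<delta>>0. \<forall>h. L2 D h \<and> L2norm D h < \<delta> \<longrightarrow>
      \<bar>J (ysol D k (\<lambda>x. u x + h x)) - J (ysol D k u) - L2inner D (ysol D k Gj) h\<bar> \<le> \<epsilon> * L2norm D h"
  proof (intro exI conjI allI impI)
    show "\<delta> > 0" by fact
    fix h assume hh: "L2 D h \<and> L2norm D h < \<delta>"
    then have hL: "L2 D h" and hs: "L2norm D h < \<delta>" by auto
    have nh: "0 \<le> L2norm D h" using L2norm_nonneg[OF Dopen Dbdd Dne] .
    have Th: "L2norm D (ysol D k h) \<le> C * L2norm D h" using bnd2[OF hL T_solves[OF hL]] .
    have "C * L2norm D h \<le> (C + 1) * L2norm D h" using nh by (simp add: algebra_simps)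
    also have "\<dots> < (C + 1) * \<delta>" using hs Cnn by (intro mult_strict_left_mono) auto
    also have "\<dots> = \<delta>'" unfolding \<delta>_def using Cnn by simp
    finally have Ths: "L2norm D (ysol D k h) < \<delta>'" using Th by linarith
    have ThL: "L2 D (ysol D k h)" using T_L2[OF hL] .
    have TuL: "L2 D (ysol D k u)" using T_L2[OF uL] .
    have eqJ: "J (ysol D k (\<lambda>x. u x + h x)) = J (\<lambda>x. ysol D k u x + ysol D k h x)"
      using Jae[OF T_L2[OF L2_add[OF Dopen Dbdd Dne uL hL]] L2_add[OF Dopen Dbdd Dne TuL ThL] T_add[OF uL hL]] .
    have eqI: "L2inner D Gj (ysol D k h) = L2inner D (ysol D k Gj) h"
      using T_sym[OF GjL hL] L2inner_comm[OF Dopen Dbdd Dne] by metis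
    have "\<bar>J (\<lambda>x. ysol D k u x + ysol D k h x) - J (ysol D k u) - L2inner D Gj (ysol D k h)\<bar>
        \<le> e' * L2norm D (ysol D k h)" using hd ThL Ths by blast
    also have "\<dots> \<le> e' * (C * L2norm D h)" using Th e' by (intro mult_left_mono) auto
    also have "\<dots> \<le> \<epsilon> * L2norm D h"
    proof -
      have "e' * (C * L2norm D h) = \<epsilon> * L2norm D h * (C / (C + 1))" unfolding e'_def by simp
      also have "\<dots> \<le> \<epsilon> * L2norm D h * 1" using ep nh Cnn by (intro mult_left_mono) auto
      finally show ?thesis by simp
    qed
    finally show "\<bar>J (ysol D k (\<lambda>x. u x + h x)) - J (ysol D k u) - L2inner D (ysol D k Gj) h\<bar> \<le> \<epsilon> * L2norm D h"
      using eqJ eqI by simp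
  qed
qed

end
end

end
theorem lemma4p6:
  fixes D :: "'a::euclidean_space set"
    and J :: "('a \<Rightarrow> real) \<Rightarrow> real"
    and ell :: real
    and \<rho> :: "real poly"
    and lo up :: "'a \<Rightarrow> real"
    and M :: "'w measure"
    and \<xi>r :: "'w \<Rightarrow> 'b::polish_space"
    and \<kappa> :: "'b \<Rightarrow> 'a \<Rightarrow> real"
    and \<kappa>inf \<kappa>sup CH2 CH2Linf :: real
  assumes dim: "DIM('a) \<in> {1, 2, 3}"
    and dom: "polyhedral_domain D"
    and lo_Linf: "Linf D lo" and up_Linf: "Linf D up"
    and lo_up: "AE x in lebesgue_on D. lo x \<le> 0 \<and> 0 \<le> up x"
    and prob: "prob_space M"
    and xi_meas: "\<xi>r \<in> measurable M borel"
    and J_nonneg: "\<And>v. L2 D v \<Longrightarrow> 0 \<le> J v"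
    and J_ae: "\<And>v w. L2 D v \<Longrightarrow> L2 D w \<Longrightarrow> (AE x in lebesgue_on D. v x = w x) \<Longrightarrow> J v = J w"
    and J_convex: "\<And>v w t. L2 D v \<Longrightarrow> L2 D w \<Longrightarrow> 0 \<le> t \<Longrightarrow> t \<le> 1 \<Longrightarrow>
        J (\<lambda>x. t * v x + (1 - t) * w x) \<le> t * J v + (1 - t) * J w"
    and J_grad: "\<exists>DJ. (\<forall>v. L2 D v \<longrightarrow> L2_gradient D J v (DJ v)) \<and>
        (\<forall>v w. L2 D v \<and> L2 D w \<longrightarrow> L2norm D (\<lambda>x. DJ v x - DJ w x) \<le> ell * L2norm D (\<lambda>x. v x - w x))"
    and J_growth: "mono_on {0..} (poly \<rho>)" "\<And>v. L2 D v \<Longrightarrow> J v \<le> poly \<rho> (L2norm D v)"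
    and \<kappa>_C1: "\<And>\<xi>. C1cl D (\<kappa> \<xi>)"
    and \<kappa>_meas: "\<kappa> \<in> measurable borel (C1_borel D)"
    and \<kappa>_moments: "\<And>p::nat. integrable M (\<lambda>\<omega>. C1norm D (\<kappa> (\<xi>r \<omega>)) ^ p)"
    and \<kappa>inf_pos: "\<kappa>inf > 0"
    and \<kappa>_lower: "\<And>\<xi> x. x \<in> closure D \<Longrightarrow> \<kappa> \<xi> x \<ge> \<kappa>inf"
    and CH2_pos: "CH2 > 0"
    and CH2_bound: "\<And>k u y. C1cl D k \<Longrightarrow> (\<forall>x\<in>closure D. k x > \<kappa>inf / 2) \<Longrightarrow> L2 D u \<Longrightarrow>
        solves D k u y \<Longrightarrow>
        \<exists>g h. H2wit D y g h \<and>
          H2norm_wit D y g h \<le> CH2 * C1norm D k ^ 3 / (\<kappa>inf / 2) ^ 4 * L2norm D u"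
    and CH2Linf: "\<And>v g h. H2wit D v g h \<Longrightarrow> Linfnorm D v \<le> ereal (CH2Linf * H2norm_wit D v g h)"
    and \<kappa>sup_pos: "\<kappa>sup > 0"
    and \<kappa>_upper: "\<And>\<xi>. C1norm D (\<kappa> \<xi>) \<le> \<kappa>sup"
  shows "\<forall>\<xi> u1 u2 G1 G2.
      L2 D u1 \<and> (AE x in lebesgue_on D. lo x \<le> u1 x \<and> u1 x \<le> up x) \<and>
      L2 D u2 \<and> (AE x in lebesgue_on D. lo x \<le> u2 x \<and> u2 x \<le> up x) \<and>
      L2_gradient D (gfun D J \<kappa> \<xi>) u1 G1 \<and> L2_gradient D (gfun D J \<kappa> \<xi>) u2 G2 \<longrightarrow>
      Linfnorm D (\<lambda>x. G1 x - G2 x)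
        \<le> ereal (ell * (CH2Linf * (CH2 * \<kappa>sup ^ 3 / (\<kappa>inf / 2) ^ 4)) ^ 2 * L1norm D (\<lambda>x. u1 x - u2 x))"
proof (intro allI impI)
  fix \<xi> u1 u2 G1 G2
  assume H: "L2 D u1 \<and> (AE x in lebesgue_on D. lo x \<le> u1 x \<and> u1 x \<le> up x) \<and>
      L2 D u2 \<and> (AE x in lebesgue_on D. lo x \<le> u2 x \<and> u2 x \<le> up x) \<and>
      L2_gradient D (gfun D J \<kappa> \<xi>) u1 G1 \<and> L2_gradient D (gfun D J \<kappa> \<xi>) u2 G2"
  then have u1L: "L2 D u1" and u2L: "L2 D u2" and g1: "L2_gradient D (gfun D J \<kappa> \<xi>) u1 G1"
    and g2: "L2_gradient D (gfun D J \<kappa> \<xi>) u2 G2" by auto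
  have Dopen: "open D" and Dbdd: "bounded D" and Dne: "D \<noteq> {}"
    using dom unfolding polyhedral_domain_def by auto
  define k where "k = \<kappa> \<xi>"
  have kC1: "C1cl D k" unfolding k_def by (rule \<kappa>_C1)
  have kcont: "continuous_on (closure D) k" using kC1 unfolding C1cl_def by blast
  have kmeas: "k \<in> borel_measurable (lebesgue_on D)" using cont_bdd(1)[OF Dopen Dbdd Dne kcont] .
  obtain B where B: "\<forall>x\<in>closure D. \<bar>k x\<bar> \<le> B" using cont_bdd(2)[OF Dopen Dbdd Dne kcont] by blast
  have kB: "\<And>x. x \<in> D \<Longrightarrow> \<bar>k x\<bar> \<le> B" using B closure_subset by blast
  have kpos: "\<forall>x\<in>closure D. k x > \<kappa>inf / 2"
    using \<kappa>_lower \<kappa>inf_pos unfolding k_def by (smt (verit, best) field_sum_of_halves)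
  define C where "C = CH2 * \<kappa>sup ^ 3 / (\<kappa>inf / 2) ^ 4"
  have Cnn: "0 \<le> C" unfolding C_def using CH2_pos \<kappa>sup_pos \<kappa>inf_pos by simp
  define A where "A = \<bar>CH2Linf\<bar> * C"
  have Ann: "0 \<le> A" unfolding A_def using Cnn by simp
  have H2: "\<exists>g h. H2wit D y g h \<and> H2norm_wit D y g h \<le> C * L2norm D u \<and> 0 \<le> H2norm_wit D y g h
      \<and> L2norm D y \<le> H2norm_wit D y g h"
    if uL: "L2 D u" and s: "solves D k u y" for u y
  proof -
    obtain g h where gh: "H2wit D y g h"
      and hb: "H2norm_wit D y g h \<le> CH2 * C1norm D k ^ 3 / (\<kappa>inf / 2) ^ 4 * L2norm D u"
      using CH2_bound[OF kC1 kpos uL s] by blast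
    have ck: "CH2 * C1norm D k ^ 3 / (\<kappa>inf / 2) ^ 4 \<le> C"
    proof (cases "0 \<le> C1norm D k")
      case True
      have "C1norm D k ^ 3 \<le> \<kappa>sup ^ 3" using power_mono[OF \<kappa>_upper[of \<xi>, folded k_def] True, of 3] by simp
      then show ?thesis unfolding C_def using CH2_pos \<kappa>inf_pos
        by (intro divide_right_mono mult_left_mono) auto
    next
      case False
      then have "C1norm D k ^ 3 < 0" by (simp add: power_less_zero_eq)
      then have "CH2 * C1norm D k ^ 3 / (\<kappa>inf / 2) ^ 4 < 0"
        using CH2_pos \<kappa>inf_pos by (simp add: divide_neg_pos mult_pos_neg)
      then show ?thesis using Cnn by simp
    qed
    have "CH2 * C1norm D k ^ 3 / (\<kappa>inf / 2) ^ 4 * L2norm D u \<le> C * L2norm D u"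
      using ck L2norm_nonneg[OF Dopen Dbdd Dne, of u] by (intro mult_right_mono) auto
    then have hb2: "H2norm_wit D y g h \<le> C * L2norm D u" using hb by linarith
    have s1: "0 \<le> (\<Sum>i\<in>Basis. L2sq D (g i))" by (intro sum_nonneg L2sq_nonneg[OF Dopen Dbdd Dne])
    have s2: "0 \<le> (\<Sum>i\<in>Basis. \<Sum>j\<in>Basis. L2sq D (h i j))"
      by (intro sum_nonneg L2sq_nonneg[OF Dopen Dbdd Dne])
    have s0: "0 \<le> L2sq D y" by (rule L2sq_nonneg[OF Dopen Dbdd Dne])
    have hn: "0 \<le> H2norm_wit D y g h" unfolding H2norm_wit_def using s0 s1 s2 by simp
    have "L2norm D y \<le> H2norm_wit D y g h"
      unfolding L2norm_def H2norm_wit_def using s1 s2 by simp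
    then show ?thesis using gh hb2 hn by blast
  qed
  have bnd2: "L2norm D y \<le> C * L2norm D u" if "L2 D u" "solves D k u y" for u y
    using H2[OF that] by auto
  have bndI: "Linfnorm D y \<le> ereal (A * L2norm D u)" if uL: "L2 D u" and s: "solves D k u y" for u y
  proof -
    obtain g h where gh: "H2wit D y g h" and b: "H2norm_wit D y g h \<le> C * L2norm D u" and n: "0 \<le> H2norm_wit D y g h"
      using H2[OF uL s] by blast
    have "Linfnorm D y \<le> ereal (CH2Linf * H2norm_wit D y g h)" using CH2Linf[OF gh] .
    also have "CH2Linf * H2norm_wit D y g h \<le> \<bar>CH2Linf\<bar> * (C * L2norm D u)"
    proof -
      have "CH2Linf * H2norm_wit D y g h \<le> \<bar>CH2Linf\<bar> * H2norm_wit D y g h" using n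
        by (intro mult_right_mono) auto
      also have "\<dots> \<le> \<bar>CH2Linf\<bar> * (C * L2norm D u)" using b by (intro mult_left_mono) auto
      finally show ?thesis .
    qed
    then have "ereal (CH2Linf * H2norm_wit D y g h) \<le> ereal (A * L2norm D u)" unfolding A_def by simp
    finally show ?thesis .
  qed
  obtain DJ where DJg: "\<And>v. L2 D v \<Longrightarrow> L2_gradient D J v (DJ v)"
    and DJlip: "\<And>v w. L2 D v \<Longrightarrow> L2 D w \<Longrightarrow> L2norm D (\<lambda>x. DJ v x - DJ w x) \<le> ell * L2norm D (\<lambda>x. v x - w x)"
    using J_grad by blast
  have ell: "0 \<le> ell"
  proof -
    have c1: "L2 D (\<lambda>x. 1::real)" using L2_bdd[OF Dopen Dbdd Dne, of "\<lambda>x. 1" 1] by simp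
    have c0: "L2 D (\<lambda>x. 0::real)" using L2_bdd[OF Dopen Dbdd Dne, of "\<lambda>x. 0" 0] by simp
    have "L2sq D (\<lambda>x. 1 - 0) = measure (lebesgue_on D) D"
      unfolding L2sq_def using D_leb[OF Dopen Dbdd Dne] by (simp add: lebesgue_integral_const)
    then have "L2norm D (\<lambda>x. 1 - 0) > 0" unfolding L2norm_def using measD_pos[OF Dopen Dbdd Dne] by simp
    moreover have "0 \<le> ell * L2norm D (\<lambda>x. 1 - 0)"
      using DJlip[OF c1 c0] L2norm_nonneg[OF Dopen Dbdd Dne, of "\<lambda>x. DJ (\<lambda>x. 1) x - DJ (\<lambda>x. 0) x"] by simp
    ultimately show ?thesis by (simp add: zero_le_mult_iff)
  qed
  have rhs: "0 \<le> ell * (CH2Linf * (CH2 * \<kappa>sup ^ 3 / (\<kappa>inf / 2) ^ 4)) ^ 2 * L1norm D (\<lambda>x. u1 x - u2 x)"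
    using ell L1_nonneg[OF Dopen Dbdd Dne] by simp
  have rhsA: "ell * (CH2Linf * (CH2 * \<kappa>sup ^ 3 / (\<kappa>inf / 2) ^ 4)) ^ 2 = ell * A^2"
  proof -
    have sq: "\<And>x c::real. (x*c)^2 = (\<bar>x\<bar>*c)^2" by (simp add: power_mult_distrib)
    show ?thesis unfolding A_def C_def
      using sq[of CH2Linf "CH2 * \<kappa>sup ^ 3 / (\<kappa>inf / 2) ^ 4"] by (rule arg_cong[where f="\<lambda>z. ell * z"])
  qed
  have Feq: "gfun D J \<kappa> \<xi> = (\<lambda>v. J (ysol D k v))" by (rule ext) (simp add: gfun_def k_def)
  note g1' = g1[unfolded Feq] and g2' = g2[unfolded Feq]
  have G1L: "L2 D G1" and G2L: "L2 D G2" using g1 g2 unfolding L2_gradient_def by auto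
  show "Linfnorm D (\<lambda>x. G1 x - G2 x)
        \<le> ereal (ell * (CH2Linf * (CH2 * \<kappa>sup ^ 3 / (\<kappa>inf / 2) ^ 4)) ^ 2 * L1norm D (\<lambda>x. u1 x - u2 x))"
  proof (cases "\<forall>u. L2 D u \<longrightarrow> (\<exists>y. solves D k u y)")
    case True
    then have ex: "\<And>u. L2 D u \<Longrightarrow> \<exists>y. solves D k u y" by blast
    have TS: "solves D k u (ysol D k u)" if "L2 D u" for u
      using T_solves[OF Dopen Dbdd Dne kmeas kB Cnn Ann bnd2 bndI ex] that by blast
    have TL: "L2 D (ysol D k u)" if "L2 D u" for u
      using T_L2[OF Dopen Dbdd Dne kmeas kB Cnn Ann bnd2 bndI ex] that by blast
    have TD: "AE x in lebesgue_on D. ysol D k (\<lambda>x. u x - w x) x = ysol D k u x - ysol D k w x"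
      if "L2 D u" "L2 D w" for u w
      using T_diff[OF Dopen Dbdd Dne kmeas kB Cnn Ann bnd2 bndI ex] that by blast
    have TG: "L2_gradient D (\<lambda>v. J (ysol D k v)) u (ysol D k Gj)"
      if "L2 D u" "L2_gradient D J (ysol D k u) Gj" for u Gj
      using T_grad[OF Dopen Dbdd Dne kmeas kB Cnn Ann bnd2 bndI ex] that J_ae by blast
    have TDu: "L2norm D (ysol D k z) \<le> A * L1norm D z" if "L2 D z" for z
      using T_dual[OF Dopen Dbdd Dne kmeas kB Cnn Ann bnd2 bndI ex] that by blast
    define y1 where "y1 = ysol D k u1"
    define y2 where "y2 = ysol D k u2"
    have y1L: "L2 D y1" and y2L: "L2 D y2" unfolding y1_def y2_def using TL u1L u2L by auto
    have DJ1: "L2 D (DJ y1)" and DJ2: "L2 D (DJ y2)" using DJg[OF y1L] DJg[OF y2L] unfolding L2_gradient_def by auto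
    have gt1: "L2_gradient D (\<lambda>v. J (ysol D k v)) u1 (ysol D k (DJ y1))"
      using TG[OF u1L DJg[OF y1L, unfolded y1_def]] unfolding y1_def .
    have gt2: "L2_gradient D (\<lambda>v. J (ysol D k v)) u2 (ysol D k (DJ y2))"
      using TG[OF u2L DJg[OF y2L, unfolded y2_def]] unfolding y2_def .
    have a1: "AE x in lebesgue_on D. G1 x = ysol D k (DJ y1) x" using grad_unique[OF Dopen Dbdd Dne g1' gt1] .
    have a2: "AE x in lebesgue_on D. G2 x = ysol D k (DJ y2) x" using grad_unique[OF Dopen Dbdd Dne g2' gt2] .
    define w where "w = (\<lambda>x. DJ y1 x - DJ y2 x)"
    have wL: "L2 D w" unfolding w_def using L2_diff[OF Dopen Dbdd Dne DJ1 DJ2] .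
    have a3: "AE x in lebesgue_on D. ysol D k w x = ysol D k (DJ y1) x - ysol D k (DJ y2) x"
      unfolding w_def using TD[OF DJ1 DJ2] .
    have aeq: "AE x in lebesgue_on D. G1 x - G2 x = ysol D k w x" using a1 a2 a3 by (auto elim!: AE_mp)
    have "Linfnorm D (\<lambda>x. G1 x - G2 x) = Linfnorm D (ysol D k w)"
      using Linf_cong[OF Dopen Dbdd Dne _ _ aeq] L2_meas[OF Dopen Dbdd Dne L2_diff[OF Dopen Dbdd Dne G1L G2L]]
        L2_meas[OF Dopen Dbdd Dne TL[OF wL]] by blast
    also have "\<dots> \<le> ereal (A * L2norm D w)" using bndI[OF wL TS[OF wL]] .
    also have "A * L2norm D w \<le> ell * A^2 * L1norm D (\<lambda>x. u1 x - u2 x)"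
    proof -
      have "L2norm D w \<le> ell * L2norm D (\<lambda>x. y1 x - y2 x)" unfolding w_def using DJlip[OF y1L y2L] .
      also have "L2norm D (\<lambda>x. y1 x - y2 x) = L2norm D (ysol D k (\<lambda>x. u1 x - u2 x))"
      proof (rule L2norm_cong[OF Dopen Dbdd Dne])
        show "L2 D (\<lambda>x. y1 x - y2 x)" using L2_diff[OF Dopen Dbdd Dne y1L y2L] .
        show "L2 D (ysol D k (\<lambda>x. u1 x - u2 x))" using TL[OF L2_diff[OF Dopen Dbdd Dne u1L u2L]] .
        show "AE x in lebesgue_on D. y1 x - y2 x = ysol D k (\<lambda>x. u1 x - u2 x) x"
          using TD[OF u1L u2L] unfolding y1_def y2_def by (auto elim!: AE_mp)
      qed
      also have "ell * L2norm D (ysol D k (\<lambda>x. u1 x - u2 x)) \<le> ell * (A * L1norm D (\<lambda>x. u1 x - u2 x))"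
        using TDu[OF L2_diff[OF Dopen Dbdd Dne u1L u2L]] ell by (intro mult_left_mono) auto
      finally have "L2norm D w \<le> ell * (A * L1norm D (\<lambda>x. u1 x - u2 x))" .
      then have "A * L2norm D w \<le> A * (ell * (A * L1norm D (\<lambda>x. u1 x - u2 x)))"
        using Ann by (intro mult_left_mono) auto
      then show ?thesis by (simp add: power2_eq_square algebra_simps)
    qed
    then have "ereal (A * L2norm D w) \<le> ereal (ell * A^2 * L1norm D (\<lambda>x. u1 x - u2 x))" by simp
    finally have fin: "Linfnorm D (\<lambda>x. G1 x - G2 x) \<le> ereal (ell * A^2 * L1norm D (\<lambda>x. u1 x - u2 x))" .
    have eq: "ell * (CH2Linf * (CH2 * \<kappa>sup ^ 3 / (\<kappa>inf / 2) ^ 4)) ^ 2 * L1norm D (\<lambda>x. u1 x - u2 x)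
        = ell * A^2 * L1norm D (\<lambda>x. u1 x - u2 x)"
      using rhsA by (rule arg_cong[where f="\<lambda>z. z * L1norm D (\<lambda>x. u1 x - u2 x)"])
    show ?thesis by (subst eq) (rule fin)
  next
    case False
    then obtain u0 where u0L: "L2 D u0" and u0n: "\<not> (\<exists>y. solves D k u0 y)" by blast
    define P where "P = (\<lambda>u. L2 D u \<and> (\<exists>y. solves D k u y))"
    have Plin: "P (\<lambda>x. a * u x + b * w x)" if Pu: "P u" and Pw: "P w" for u w a b
    proof -
      obtain yu yw where "L2 D u" "L2 D w" "solves D k u yu" "solves D k w yw" using Pu Pw unfolding P_def by blast
      then show ?thesis unfolding P_def
        using L2_lin[OF Dopen Dbdd Dne] solves_lin[OF Dopen Dbdd Dne kmeas kB] by blast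
    qed
    have u0P: "\<not> P u0" unfolding P_def using u0n by blast
    have FK: "J (ysol D k u) = J (SOME y. False)" if "L2 D u" "\<not> P u" for u
    proof -
      have "(\<lambda>y. solves D k u y) = (\<lambda>y. False)" using that unfolding P_def by auto
      then show ?thesis unfolding ysol_def by simp
    qed
    have z1: "AE x in lebesgue_on D. G1 x = 0"
      using zero_grad[OF Dopen Dbdd Dne, where P=P and F="\<lambda>v. J (ysol D k v)"] Plin u0L u0P FK u1L g1' by blast
    have z2: "AE x in lebesgue_on D. G2 x = 0"
      using zero_grad[OF Dopen Dbdd Dne, where P=P and F="\<lambda>v. J (ysol D k v)"] Plin u0L u0P FK u2L g2' by blast
    have "AE x in lebesgue_on D. G1 x - G2 x = 0" using z1 z2 by (auto elim!: AE_mp)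
    then have "Linfnorm D (\<lambda>x. G1 x - G2 x) \<le> 0"
      using Linf_zero[OF Dopen Dbdd Dne] L2_meas[OF Dopen Dbdd Dne L2_diff[OF Dopen Dbdd Dne G1L G2L]] by blast
    also have "(0::ereal) \<le> ereal (ell * (CH2Linf * (CH2 * \<kappa>sup ^ 3 / (\<kappa>inf / 2) ^ 4)) ^ 2 * L1norm D (\<lambda>x. u1 x - u2 x))"
      using rhs by simp
    finally show ?thesis .
  qed
qed

end
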